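(* Let $(A_n)_{n\in\mathbb N_0}$ be invertible matrices in $\mathbb R^{d\times d}$ such that $(A_n)$ and $(A_n^{-1})$ are uniformly bounded, let $(Q_n)_{n\in\mathbb N_0}$ be invertible matrices in $\mathbb R^{d\times d}$ and set $\tilde A_n=Q_{n+1}A_nQ_n^{-1}$. Fix $s\in\{1,\dots,d\}$. (i) If $Q_n=q_nI_d$ with $q_n\neq0$ for all $n$, then each of the four angular values $\theta_s^{\sup,\varlimsup},\theta_s^{\sup,\varliminf},\theta_s^{\varlimsup,\sup},\theta_s^{\varliminf,\sup}$ of $(A_n)$ coincides with the corresponding angular value of $(\tilde A_n)$. (ii) If $\lim_{n\to\infty}Q_n=Q$ with $Q$ orthogonal, the same conclusion as in (i) holds. (iii) If $\lim_{n\to\infty}Q_n=Q$ with $Q$ invertible, then each of the four angular values of $(A_n)$ vanishes if and only if the corresponding angular value of $(\tilde A_n)$ vanishes.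
   Context: For a sequence $(A_n)_{n\in\mathbb N_0}$ of invertible $d\times d$ matrices (the system $u_{n+1}=A_nu_n$) define the solution operator $\Phi(n,m)=A_{n-1}\cdots A_m$ for $n>m$ and $\Phi(n,n)=I_d$. $\mathcal G(s,d)$ is the Grassmannian of $s$-dimensional subspaces of $\mathbb R^d$. For $V,W\in\mathcal G(s,d)$ choose $P,Q\in\mathbb R^{d\times s}$ with orthonormal columns spanning $V,W$; the principal angles $0\le\phi_1\le\dots\le\phi_s\le\pi/2$ are defined by $\cos\phi_j=\sigma_j$ with $\sigma_1\ge\dots\ge\sigma_s\ge0$ the singular values of $P^\top Q$, and $\angle(V,W):=\phi_s$. For $V\in\mathcal G(s,d)$ let $a_{1,n}(V)=\sum_{j=1}^n\angle(\Phi(j-1,0)V,\Phi(j,0)V)$. The angular values of dimension $s$ are $\theta_s^{\sup,\varlimsup}=\sup_{V\in\mathcal G(s,d)}\varlimsup_{n\to\infty}\frac1n a_{1,n}(V)$, $\theta_s^{\sup,\varliminf}=\sup_{V}\varliminf_{n\to\infty}\frac1n a_{1,n}(V)$ (outer), and $\theta_s^{\varlimsup,\sup}=\varlimsup_{n\to\infty}\sup_V\frac1n a_{1,n}(V)$, $\theta_s^{\varliminf,\sup}=\varliminf_{n\to\infty}\sup_V\frac1na_{1,n}(V)$ (inner). *)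

theory Defs
  imports "HOL-Analysis.Analysis"
begin

text \<open>Dimension d is CARD('n); matrices are real^'n^'n.\<close>

text \<open>Solution operator: Phi A n m = A(n-1) ** ... ** A m for n > m, identity for n \<le> m.\<close>
primrec Phi :: "(nat \<Rightarrow> real^'n^'n) \<Rightarrow> nat \<Rightarrow> nat \<Rightarrow> real^'n^'n" where
  "Phi A 0 m = mat 1"
| "Phi A (Suc n) m = (if Suc n \<le> m then mat 1 else A n ** Phi A n m)"

definition Grassmannian :: "nat \<Rightarrow> (real^'n) set set" where
  "Grassmannian s = {V. subspace V \<and> dim V = s}"

text \<open>p 0, ..., p (s-1) are orthonormal columns of a d x s matrix P spanning V.\<close>
definition onb_of :: "nat \<Rightarrow> (real^'n) set \<Rightarrow> (nat \<Rightarrow> real^'n) \<Rightarrow> bool" where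
  "onb_of s V p \<longleftrightarrow> (\<forall>i<s. \<forall>j<s. p i \<bullet> p j = (if i = j then 1 else 0)) \<and> span (p ` {..<s}) = V"

text \<open>Smallest singular value sigma_s of the s x s matrix P^T Q
  (columns p, q): min over unit x in R^s of |P^T Q x|.\<close>
definition sigma_min :: "nat \<Rightarrow> (nat \<Rightarrow> real^'n) \<Rightarrow> (nat \<Rightarrow> real^'n) \<Rightarrow> real" where
  "sigma_min s p q = Inf {sqrt (\<Sum>i<s. (p i \<bullet> (\<Sum>j<s. x j *\<^sub>R q j))\<^sup>2) | x. (\<Sum>j<s. (x j)\<^sup>2) = 1}"

text \<open>Largest principal angle between V and W (both of dimension s = dim V).\<close>
definition sub_angle :: "(real^'n) set \<Rightarrow> (real^'n) set \<Rightarrow> real" where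
  "sub_angle V W = arccos (sigma_min (dim V) (SOME p. onb_of (dim V) V p) (SOME q. onb_of (dim V) W q))"

definition mimage :: "real^'n^'n \<Rightarrow> (real^'n) set \<Rightarrow> (real^'n) set" where
  "mimage M V = (\<lambda>v. M *v v) ` V"

definition a1n :: "(nat \<Rightarrow> real^'n^'n) \<Rightarrow> nat \<Rightarrow> (real^'n) set \<Rightarrow> real" where
  "a1n A n V = (\<Sum>j=1..n. sub_angle (mimage (Phi A (j-1) 0) V) (mimage (Phi A j 0) V))"

definition theta_sup_limsup :: "nat \<Rightarrow> (nat \<Rightarrow> real^'n^'n) \<Rightarrow> ereal" where
  "theta_sup_limsup s A = (SUP V\<in>Grassmannian s. limsup (\<lambda>n. ereal (a1n A n V / real n)))"

definition theta_sup_liminf :: "nat \<Rightarrow> (nat \<Rightarrow> real^'n^'n) \<Rightarrow> ereal" where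
  "theta_sup_liminf s A = (SUP V\<in>Grassmannian s. liminf (\<lambda>n. ereal (a1n A n V / real n)))"

definition theta_limsup_sup :: "nat \<Rightarrow> (nat \<Rightarrow> real^'n^'n) \<Rightarrow> ereal" where
  "theta_limsup_sup s A = limsup (\<lambda>n. SUP V\<in>Grassmannian s. ereal (a1n A n V / real n))"

definition theta_liminf_sup :: "nat \<Rightarrow> (nat \<Rightarrow> real^'n^'n) \<Rightarrow> ereal" where
  "theta_liminf_sup s A = liminf (\<lambda>n. SUP V\<in>Grassmannian s. ereal (a1n A n V / real n))"

end

theory Submission
  imports Defs
begin

definition unitS :: "(real^'n) set \<Rightarrow> (real^'n) set" where
  "unitS W = {w\<in>W. norm w = 1}"

definition gap :: "(real^'n) set \<Rightarrow> (real^'n) set \<Rightarrow> real" where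
  "gap W V = Sup ((\<lambda>w. infdist w V) ` unitS W)"

lemma proj_exists:
  fixes V :: "(real^'n) set"
  assumes "subspace V"
  obtains u where "u \<in> V" "\<And>v. v \<in> V \<Longrightarrow> inner (w - u) v = 0"
proof -
  obtain y z where "y \<in> span V" "\<And>x. x \<in> span V \<Longrightarrow> orthogonal z x" "w = y + z"
    using orthogonal_subspace_decomp_exists[of V w] by blast
  moreover have "span V = V" using assms by (simp add: span_eq_iff)
  ultimately show ?thesis using that[of y] by (auto simp: orthogonal_def)
qed

lemma proj_infdist:
  fixes V :: "(real^'n) set"
  assumes "subspace V" "u \<in> V" "\<And>v. v \<in> V \<Longrightarrow> inner (w - u) v = 0"
  shows "infdist w V = norm (w - u)" "norm u \<le> norm w"
    "(norm w)^2 = (norm u)^2 + (norm (w - u))^2"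
proof -
  have ne: "V \<noteq> {}" using assms(2) by auto
  have cl: "closed V" using assms(1) by (rule closed_subspace)
  have pyth: "(norm (w - v))^2 = (norm (w - u))^2 + (norm (u - v))^2" if "v \<in> V" for v
  proof -
    have "u - v \<in> V" using assms(1,2) that by (simp add: subspace_diff)
    then have o: "inner (w - u) (u - v) = 0" using assms(3) by blast
    have "w - v = (w - u) + (u - v)" by simp
    then have "(norm (w - v))^2 = (norm ((w - u) + (u - v)))^2" by simp
    also have "\<dots> = (norm (w - u))^2 + (norm (u - v))^2"
      using norm_add_Pythagorean[of "w - u" "u - v"] o by (simp add: orthogonal_def)
    finally show ?thesis .
  qed
  obtain v where v: "v \<in> V" "infdist w V = dist w v" using infdist_attains_inf[OF cl ne] by blast
  have "infdist w V \<le> dist w u" using assms(2) by (rule infdist_le)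
  moreover have "norm (w - u) \<le> norm (w - v)"
  proof (rule power2_le_imp_le)
    show "(norm (w - u))^2 \<le> (norm (w - v))^2" using pyth[OF v(1)] by simp
  qed simp
  ultimately show "infdist w V = norm (w - u)" using v by (simp add: dist_norm)
  have "0 \<in> V" using assms(1) by (simp add: subspace_0)
  from pyth[OF this] show "(norm w)^2 = (norm u)^2 + (norm (w - u))^2" by (simp only: diff_zero add.commute)
  then have "(norm u)^2 \<le> (norm w)^2" by simp
  then show "norm u \<le> norm w"
    by (rule power2_le_imp_le) simp
qed

lemma infdist_sub_le_norm:
  fixes V :: "(real^'n) set"
  assumes "subspace V"
  shows "infdist w V \<le> norm w"
  using infdist_le[OF subspace_0[OF assms], of w] by simp

lemma infdist_scale:
  fixes V :: "(real^'n) set"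
  assumes "subspace V"
  shows "infdist (c *\<^sub>R w) V = \<bar>c\<bar> * infdist w V"
proof -
  obtain u where u: "u \<in> V" "\<And>v. v \<in> V \<Longrightarrow> inner (w - u) v = 0"
    using proj_exists[OF assms] by blast
  have "c *\<^sub>R u \<in> V" using assms u(1) by (simp add: subspace_scale)
  moreover have "inner (c *\<^sub>R w - c *\<^sub>R u) v = 0" if "v \<in> V" for v
    using u(2)[OF that] by (simp add: algebra_simps)
  ultimately have "infdist (c *\<^sub>R w) V = norm (c *\<^sub>R w - c *\<^sub>R u)"
    using proj_infdist(1)[OF assms] by blast
  also have "\<dots> = \<bar>c\<bar> * norm (w - u)"
    by (metis norm_scaleR scaleR_right_diff_distrib)
  finally show ?thesis using proj_infdist(1)[OF assms u] by simp
qed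

lemma unitS_ne:
  fixes W :: "(real^'n) set"
  assumes "subspace W" "1 \<le> dim W"
  shows "unitS W \<noteq> {}"
proof -
  have "\<not> W \<subseteq> {0}" using assms(2) by (metis dim_eq_0 not_one_le_zero)
  then obtain w where w: "w \<in> W" "w \<noteq> 0" by blast
  then have "(1 / norm w) *\<^sub>R w \<in> unitS W"
    using assms(1) by (simp add: unitS_def subspace_scale)
  then show ?thesis by blast
qed

lemma gap_props:
  fixes W V :: "(real^'n) set"
  assumes "subspace V" "unitS W \<noteq> {}"
  shows "\<And>w. w \<in> unitS W \<Longrightarrow> infdist w V \<le> gap W V" "0 \<le> gap W V" "gap W V \<le> 1"
proof -
  have bdd: "bdd_above ((\<lambda>w. infdist w V) ` unitS W)"
  proof (rule bdd_aboveI[of _ 1])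
    fix x assume "x \<in> (\<lambda>w. infdist w V) ` unitS W"
    then obtain w where "w \<in> unitS W" "x = infdist w V" by blast
    then show "x \<le> 1" using infdist_sub_le_norm[OF assms(1), of w] by (simp add: unitS_def)
  qed
  show *: "infdist w V \<le> gap W V" if "w \<in> unitS W" for w
    unfolding gap_def by (rule cSup_upper[OF _ bdd]) (use that in auto)
  obtain w where "w \<in> unitS W" using assms(2) by blast
  from *[OF this] show "0 \<le> gap W V" by (meson infdist_nonneg order_trans)
  show "gap W V \<le> 1" unfolding gap_def
  proof (rule cSup_least)
    show "(\<lambda>w. infdist w V) ` unitS W \<noteq> {}" using assms(2) by simp
    fix x assume "x \<in> (\<lambda>w. infdist w V) ` unitS W"
    then obtain w where "w \<in> unitS W" "x = infdist w V" by blast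
    then show "x \<le> 1" using infdist_sub_le_norm[OF assms(1), of w] by (simp add: unitS_def)
  qed
qed

lemma gap_le:
  fixes W V :: "(real^'n) set"
  assumes "unitS W \<noteq> {}" "\<And>w. w \<in> unitS W \<Longrightarrow> infdist w V \<le> c"
  shows "gap W V \<le> c"
  unfolding gap_def by (rule cSup_least) (use assms in auto)

lemma infdist_le_gap:
  fixes W V :: "(real^'n) set"
  assumes "subspace W" "subspace V" "unitS W \<noteq> {}" "w \<in> W"
  shows "infdist w V \<le> norm w * gap W V"
proof (cases "w = 0")
  case True
  then show ?thesis using infdist_zero[OF subspace_0[OF assms(2)]] by simp
next
  case False
  have u: "(1 / norm w) *\<^sub>R w \<in> unitS W"
    using assms(1,4) False by (simp add: unitS_def subspace_scale)
  have "w = norm w *\<^sub>R ((1 / norm w) *\<^sub>R w)" using False by simp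
  then have "infdist w V = norm w * infdist ((1 / norm w) *\<^sub>R w) V"
    by (metis abs_norm_cancel infdist_scale[OF assms(2)])
  also have "\<dots> \<le> norm w * gap W V"
    using gap_props(1)[OF assms(2,3) u] by (simp add: mult_left_mono)
  finally show ?thesis .
qed

lemma gap_triangle:
  fixes W V U :: "(real^'n) set"
  assumes "subspace W" "subspace V" "subspace U" "unitS W \<noteq> {}" "unitS V \<noteq> {}"
  shows "gap W U \<le> gap W V + gap V U"
proof (rule gap_le[OF assms(4)])
  fix w assume w: "w \<in> unitS W"
  obtain u where u: "u \<in> V" "\<And>v. v \<in> V \<Longrightarrow> inner (w - u) v = 0"
    using proj_exists[OF assms(2)] by blast
  have nu: "norm u \<le> 1" using proj_infdist(2)[OF assms(2) u] w by (simp add: unitS_def)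
  have "infdist w U \<le> infdist u U + dist w u" by (rule infdist_triangle)
  also have "dist w u = infdist w V" using proj_infdist(1)[OF assms(2) u] by (simp add: dist_norm)
  also have "\<dots> \<le> gap W V" using gap_props(1)[OF assms(2,4) w] .
  also have "infdist u U \<le> norm u * gap V U" by (rule infdist_le_gap[OF assms(2,3,5) u(1)])
  also have "\<dots> \<le> gap V U"
    using nu gap_props(2)[OF assms(3,5)] by (simp add: mult_left_le_one_le)
  finally show "infdist w U \<le> gap W V + gap V U" by simp
qed

lemma subspace_mimage: "subspace V \<Longrightarrow> subspace (mimage M V)"
  unfolding mimage_def by (rule linear_subspace_image) (auto simp: matrix_vector_mul_linear)

lemma dim_mimage: "invertible M \<Longrightarrow> dim (mimage M V) = dim V"
  unfolding mimage_def
  by (rule dim_image_eq) (auto simp: matrix_vector_mul_linear intro: inj_on_subset[OF inj_matrix_vector_mult])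

lemma gap_lin:
  fixes W V :: "(real^'n) set"
  assumes "subspace W" "subspace V" "unitS W \<noteq> {}" "unitS (mimage M W) \<noteq> {}"
    "\<And>x. norm (M *v x) \<le> a * norm x" "\<And>x. norm x \<le> b * norm (M *v x)" "0 \<le> a"
  shows "gap (mimage M W) (mimage M V) \<le> a * b * gap W V"
proof (rule gap_le[OF assms(4)])
  fix y assume y: "y \<in> unitS (mimage M W)"
  then obtain x where x: "x \<in> W" "y = M *v x" by (auto simp: unitS_def mimage_def)
  have nx: "norm x \<le> b" using assms(6)[of x] y x by (simp add: unitS_def)
  obtain u where u: "u \<in> V" "\<And>v. v \<in> V \<Longrightarrow> inner (x - u) v = 0"
    using proj_exists[OF assms(2)] by blast
  have "M *v u \<in> mimage M V" using u(1) by (simp add: mimage_def)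
  then have "infdist y (mimage M V) \<le> dist y (M *v u)" by (rule infdist_le)
  also have "\<dots> = norm (M *v (x - u))" using x by (simp add: dist_norm matrix_vector_mult_diff_distrib)
  also have "\<dots> \<le> a * norm (x - u)" by (rule assms(5))
  finally have d1: "infdist y (mimage M V) \<le> a * norm (x - u)" .
  have "norm (x - u) = infdist x V" using proj_infdist(1)[OF assms(2) u] by simp
  also have "infdist x V \<le> norm x * gap W V" by (rule infdist_le_gap[OF assms(1,2,3) x(1)])
  also have "\<dots> \<le> b * gap W V"
    using nx gap_props(2)[OF assms(2,3)] by (rule mult_right_mono)
  finally have d2: "norm (x - u) \<le> b * gap W V" .
  have "a * norm (x - u) \<le> a * (b * gap W V)" using d2 assms(7) by (rule mult_left_mono)
  then show "infdist y (mimage M V) \<le> a * b * gap W V"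
    using d1 by (simp only: mult.assoc)
qed

lemma gap_pert:
  fixes X :: "(real^'n) set"
  assumes "subspace X" "unitS (mimage M X) \<noteq> {}"
    "\<And>x. norm x \<le> b * norm (M *v x)" "\<And>x. norm ((M - M') *v x) \<le> e * norm x" "0 \<le> e"
  shows "gap (mimage M X) (mimage M' X) \<le> e * b"
proof (rule gap_le[OF assms(2)])
  fix y assume y: "y \<in> unitS (mimage M X)"
  then obtain x where x: "x \<in> X" "y = M *v x" by (auto simp: unitS_def mimage_def)
  have nx: "norm x \<le> b" using assms(3)[of x] y x by (simp add: unitS_def)
  have "M' *v x \<in> mimage M' X" using x(1) by (simp add: mimage_def)
  then have "infdist y (mimage M' X) \<le> dist y (M' *v x)" by (rule infdist_le)
  also have "\<dots> = norm ((M - M') *v x)" using x by (simp add: dist_norm matrix_vector_mult_diff_rdistrib)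
  also have "\<dots> \<le> e * norm x" by (rule assms(4))
  also have "\<dots> \<le> e * b" using nx assms(5) by (simp add: mult_left_mono)
  finally show "infdist y (mimage M' X) \<le> e * b" .
qed

lemma onb_exists:
  fixes V :: "(real^'n) set"
  assumes "subspace V"
  shows "\<exists>p. onb_of (dim V) V p"
proof -
  obtain B where B: "B \<subseteq> V" "pairwise orthogonal B" "\<And>x. x \<in> B \<Longrightarrow> norm x = 1"
    "independent B" "card B = dim V" "span B = V"
    using orthonormal_basis_subspace[OF assms] by metis
  have fin: "finite B" using independent_bound[OF B(4)] by blast
  obtain h where h: "bij_betw h {0..<card B} B" using ex_bij_betw_nat_finite[OF fin] by blast
  have img: "h ` {..<dim V} = B" using h B(5) by (simp add: bij_betw_def atLeast0LessThan)
  have inj: "inj_on h {..<dim V}" using h B(5) by (simp add: bij_betw_def atLeast0LessThan)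
  have "h i \<bullet> h j = (if i = j then 1 else 0)" if "i < dim V" "j < dim V" for i j
  proof (cases "i = j")
    case True
    have "h i \<in> B" using img that by blast
    then have "norm (h i) = 1" using B(3) by blast
    then show ?thesis using True by (simp add: norm_eq_1)
  next
    case False
    have "h i \<in> B" "h j \<in> B" using img that by blast+
    moreover have "h i \<noteq> h j" using inj False that by (meson inj_on_eq_iff lessThan_iff)
    ultimately show ?thesis using B(2) False by (simp add: pairwise_def orthogonal_def)
  qed
  then have "onb_of (dim V) V h" unfolding onb_of_def using img B(6) by auto
  then show ?thesis by blast
qed

lemma onb_inner_sum:
  assumes "onb_of s V p" "k < s"
  shows "p k \<bullet> (\<Sum>j<s. x j *\<^sub>R p j) = x k"
proof -
  have "p k \<bullet> (\<Sum>j<s. x j *\<^sub>R p j) = (\<Sum>j<s. x j * (p k \<bullet> p j))"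
    by (simp add: inner_sum_right)
  also have "\<dots> = (\<Sum>j<s. if j = k then x j else 0)"
    using assms unfolding onb_of_def by (intro sum.cong) auto
  also have "\<dots> = x k" using assms(2) by simp
  finally show ?thesis .
qed

lemma onb_norm_sum:
  assumes "onb_of s V p"
  shows "(norm (\<Sum>j<s. x j *\<^sub>R p j))^2 = (\<Sum>j<s. (x j)^2)"
proof -
  have "(norm (\<Sum>j<s. x j *\<^sub>R p j))^2 = (\<Sum>j<s. x j *\<^sub>R p j) \<bullet> (\<Sum>j<s. x j *\<^sub>R p j)"
    by (simp add: power2_norm_eq_inner)
  also have "\<dots> = (\<Sum>i<s. x i * (p i \<bullet> (\<Sum>j<s. x j *\<^sub>R p j)))"
    by (simp add: inner_sum_left)
  also have "\<dots> = (\<Sum>i<s. (x i)^2)"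
    using onb_inner_sum[OF assms] by (intro sum.cong) (auto simp: power2_eq_square)
  finally show ?thesis .
qed

lemma onb_subspace: "onb_of s V p \<Longrightarrow> subspace V"
  unfolding onb_of_def by (metis subspace_span)

lemma onb_proj:
  fixes w :: "real^'n"
  assumes "onb_of s V p"
  defines "u \<equiv> (\<Sum>i<s. (p i \<bullet> w) *\<^sub>R p i)"
  shows "u \<in> V" "\<forall>v\<in>V. inner (w - u) v = 0"
    "(norm u)^2 = (\<Sum>i<s. (p i \<bullet> w)^2)"
proof -
  have sp: "span (p ` {..<s}) = V" using assms(1) unfolding onb_of_def by blast
  show "u \<in> V" unfolding u_def sp[symmetric]
    by (intro span_sum span_scale span_base) auto
  show "(norm u)^2 = (\<Sum>i<s. (p i \<bullet> w)^2)" unfolding u_def by (rule onb_norm_sum[OF assms(1)])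
  show "\<forall>v\<in>V. inner (w - u) v = 0"
  proof
  fix v assume "v \<in> V"
  then have v: "v \<in> span (p ` {..<s})" using sp by simp
  have "orthogonal (w - u) v"
  proof (rule orthogonal_to_span[OF v])
    fix y assume "y \<in> p ` {..<s}"
    then obtain k where k: "k < s" "y = p k" by blast
    have "p k \<bullet> u = p k \<bullet> w" unfolding u_def using onb_inner_sum[OF assms(1) k(1)] by simp
    then show "orthogonal (w - u) y" using k by (simp add: orthogonal_def inner_diff_left inner_diff_right inner_commute[of _ "p k"])
  qed
  then show "inner (w - u) v = 0" by (simp add: orthogonal_def)
  qed
qed

lemma onb_infdist:
  assumes "onb_of s V p"
  shows "(\<Sum>i<s. (p i \<bullet> w)^2) = (norm w)^2 - (infdist w V)^2"
proof -
  note sub = onb_subspace[OF assms]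
  note pr = onb_proj[OF assms, of w]
  show ?thesis using proj_infdist(1,3)[OF sub pr(1) bspec[OF pr(2)]] pr(3) by simp
qed

lemma onb_recon:
  assumes "onb_of s V p" "w \<in> V"
  shows "(\<Sum>i<s. (p i \<bullet> w) *\<^sub>R p i) = w"
proof -
  note sub = onb_subspace[OF assms(1)]
  note pr = onb_proj[OF assms(1), of w]
  have "norm (w - (\<Sum>i<s. (p i \<bullet> w) *\<^sub>R p i)) = 0"
    using proj_infdist(1)[OF sub pr(1) bspec[OF pr(2)]] infdist_zero[OF assms(2)] by simp
  then show ?thesis by simp
qed

lemma onb_in_span:
  assumes "onb_of s W q"
  shows "(\<Sum>j<s. x j *\<^sub>R q j) \<in> W"
proof -
  have sp: "span (q ` {..<s}) = W" using assms unfolding onb_of_def by blast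
  show ?thesis unfolding sp[symmetric] by (intro span_sum span_scale span_base) auto
qed

lemma sigma_min_set:
  assumes p: "onb_of s V p" and q: "onb_of s W q"
  shows "{sqrt (\<Sum>i<s. (p i \<bullet> (\<Sum>j<s. x j *\<^sub>R q j))\<^sup>2) | x. (\<Sum>j<s. (x j)\<^sup>2) = 1}
       = (\<lambda>w. sqrt (1 - (infdist w V)^2)) ` unitS W"
proof (intro equalityI subsetI)
  fix z assume "z \<in> {sqrt (\<Sum>i<s. (p i \<bullet> (\<Sum>j<s. x j *\<^sub>R q j))\<^sup>2) | x. (\<Sum>j<s. (x j)\<^sup>2) = 1}"
  then obtain x where x: "(\<Sum>j<s. (x j)\<^sup>2) = 1" "z = sqrt (\<Sum>i<s. (p i \<bullet> (\<Sum>j<s. x j *\<^sub>R q j))\<^sup>2)"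
    by blast
  define w where "w = (\<Sum>j<s. x j *\<^sub>R q j)"
  have wW: "w \<in> W" unfolding w_def by (rule onb_in_span[OF q])
  have "(norm w)^2 = 1" unfolding w_def using onb_norm_sum[OF q] x(1) by simp
  then have nw: "norm w = 1" by (smt (verit) power2_eq_1_iff norm_ge_zero)
  have "z = sqrt (1 - (infdist w V)^2)" using x(2) onb_infdist[OF p, of w] nw by (simp add: w_def)
  moreover have "w \<in> unitS W" using wW nw by (simp add: unitS_def)
  ultimately show "z \<in> (\<lambda>w. sqrt (1 - (infdist w V)^2)) ` unitS W" by blast
next
  fix z assume "z \<in> (\<lambda>w. sqrt (1 - (infdist w V)^2)) ` unitS W"
  then obtain w where w: "w \<in> W" "norm w = 1" "z = sqrt (1 - (infdist w V)^2)"
    by (auto simp: unitS_def)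
  define x where "x = (\<lambda>j. q j \<bullet> w)"
  have rec: "(\<Sum>j<s. x j *\<^sub>R q j) = w" unfolding x_def by (rule onb_recon[OF q w(1)])
  have "(\<Sum>j<s. (x j)\<^sup>2) = 1" using onb_norm_sum[OF q, of x] rec w(2) by simp
  moreover have "z = sqrt (\<Sum>i<s. (p i \<bullet> (\<Sum>j<s. x j *\<^sub>R q j))\<^sup>2)"
    using rec w(2,3) onb_infdist[OF p, of w] by simp
  ultimately show "z \<in> {sqrt (\<Sum>i<s. (p i \<bullet> (\<Sum>j<s. x j *\<^sub>R q j))\<^sup>2) | x. (\<Sum>j<s. (x j)\<^sup>2) = 1}"
    by blast
qed

lemma gap_attained:
  fixes W V :: "(real^'n) set"
  assumes "subspace W" "subspace V" "unitS W \<noteq> {}"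
  obtains w0 where "w0 \<in> unitS W" "gap W V = infdist w0 V"
    "\<And>w. w \<in> unitS W \<Longrightarrow> infdist w V \<le> infdist w0 V"
proof -
  have us: "unitS W = sphere 0 1 \<inter> W" by (auto simp: unitS_def)
  have "compact (unitS W)" unfolding us
    by (rule compact_Int_closed) (auto simp: closed_subspace assms(1))
  then have "compact ((\<lambda>w. infdist w V) ` unitS W)"
    by (rule compact_continuous_image[rotated]) (intro continuous_on_infdist continuous_on_id)
  from compact_attains_sup[OF this] assms(3)
  obtain d where d: "d \<in> (\<lambda>w. infdist w V) ` unitS W" "\<forall>t\<in>(\<lambda>w. infdist w V) ` unitS W. t \<le> d"
    by blast
  then obtain w0 where w0: "w0 \<in> unitS W" "d = infdist w0 V" by blast
  have "gap W V = infdist w0 V" unfolding gap_def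
    by (rule cSup_eq_maximum) (use d w0 in auto)
  then show ?thesis using that w0 d by blast
qed

lemma sigma_min_gap:
  assumes p: "onb_of s V p" and q: "onb_of s W q" and s: "1 \<le> s"
  shows "sigma_min s p q = sqrt (1 - (gap W V)^2)"
proof -
  have sV: "subspace V" by (rule onb_subspace[OF p])
  have sW: "subspace W" by (rule onb_subspace[OF q])
  have "q 0 \<in> span (q ` {..<s})" using s by (intro span_base) auto
  then have "q 0 \<in> W" using q unfolding onb_of_def by simp
  moreover have "norm (q 0) = 1" using q s unfolding onb_of_def by (simp add: norm_eq_1)
  ultimately have ne: "unitS W \<noteq> {}" by (auto simp: unitS_def)
  obtain w0 where w0: "w0 \<in> unitS W" "gap W V = infdist w0 V"
    "\<And>w. w \<in> unitS W \<Longrightarrow> infdist w V \<le> infdist w0 V"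
    using gap_attained[OF sW sV ne] by blast
  have "sigma_min s p q = Inf ((\<lambda>w. sqrt (1 - (infdist w V)^2)) ` unitS W)"
    unfolding sigma_min_def sigma_min_set[OF p q] ..
  also have "\<dots> = sqrt (1 - (infdist w0 V)^2)"
  proof (rule cInf_eq_minimum)
    show "sqrt (1 - (infdist w0 V)\<^sup>2) \<in> (\<lambda>w. sqrt (1 - (infdist w V)\<^sup>2)) ` unitS W"
      using w0(1) by blast
    fix z assume "z \<in> (\<lambda>w. sqrt (1 - (infdist w V)\<^sup>2)) ` unitS W"
    then obtain w where w: "w \<in> unitS W" "z = sqrt (1 - (infdist w V)\<^sup>2)" by blast
    have "infdist w V \<le> infdist w0 V" by (rule w0(3)[OF w(1)])
    moreover have "0 \<le> infdist w V" by (rule infdist_nonneg)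
    ultimately have "(infdist w V)^2 \<le> (infdist w0 V)^2" by (rule power_mono)
    then show "sqrt (1 - (infdist w0 V)\<^sup>2) \<le> z" using w(2) by simp
  qed
  finally show ?thesis using w0(2) by simp
qed

lemma sub_angle_gap:
  fixes V W :: "(real^'n) set"
  assumes "subspace V" "subspace W" "dim W = dim V" "1 \<le> dim V"
  shows "sub_angle V W = arcsin (gap W V)"
proof -
  define p where "p = (SOME p. onb_of (dim V) V p)"
  define q where "q = (SOME q. onb_of (dim V) W q)"
  have p: "onb_of (dim V) V p" unfolding p_def by (rule someI_ex[OF onb_exists[OF assms(1)]])
  have q: "onb_of (dim V) W q" unfolding q_def
    using someI_ex[OF onb_exists[OF assms(2)]] assms(3) by simp
  have ne: "unitS W \<noteq> {}" using unitS_ne[OF assms(2)] assms(3,4) by simp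
  have g: "0 \<le> gap W V" "gap W V \<le> 1" using gap_props(2,3)[OF assms(1) ne] by auto
  have "sub_angle V W = arccos (sigma_min (dim V) p q)"
    unfolding sub_angle_def p_def q_def ..
  also have "\<dots> = arccos (sqrt (1 - (gap W V)^2))" using sigma_min_gap[OF p q assms(4)] by simp
  also have "\<dots> = arcsin (gap W V)" using arcsin_arccos_sqrt_pos[OF g] by simp
  finally show ?thesis .
qed

lemma minv:
  fixes M :: "real^'n^'n"
  assumes "invertible M"
  shows "M ** matrix_inv M = mat 1" "matrix_inv M ** M = mat 1"
proof -
  have "\<exists>A'. M ** A' = mat 1 \<and> A' ** M = mat 1" using assms by (simp add: invertible_def)
  then have "M ** matrix_inv M = mat 1 \<and> matrix_inv M ** M = mat 1"
    unfolding matrix_inv_def by (rule someI_ex)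
  then show "M ** matrix_inv M = mat 1" "matrix_inv M ** M = mat 1" by auto
qed

definition cn :: "'n::finite itself \<Rightarrow> real" where
  "cn (_::'n itself) = real CARD('n) * real CARD('n)"

lemma cn_pos: "0 < cn TYPE('n::finite)"
  by (simp add: cn_def)

lemma mv_norm:
  fixes M :: "real^'n^'n"
  shows "norm (M *v x) \<le> cn TYPE('n) * norm M * norm x"
proof -
  have "\<bar>M $ i $ j\<bar> \<le> norm M" for i j
    using component_le_norm_cart[where x="M $ i" and i=j] Finite_Cartesian_Product.norm_nth_le[where x=M and i=i] by linarith
  then have "onorm ((*v) M) \<le> real CARD('n) * real CARD('n) * norm M"
    by (rule onorm_le_matrix_component)
  moreover have "norm (M *v x) \<le> onorm ((*v) M) * norm x"
    by (rule onorm[OF matrix_vector_mul_bounded_linear])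
  ultimately show ?thesis unfolding cn_def by (meson mult_right_mono norm_ge_zero order_trans)
qed

lemma mv_lower:
  fixes M :: "real^'n^'n"
  assumes "invertible M"
  shows "norm x \<le> cn TYPE('n) * norm (matrix_inv M) * norm (M *v x)"
proof -
  have "x = matrix_inv M *v (M *v x)"
    by (simp add: matrix_vector_mul_assoc minv(2)[OF assms])
  then have "norm x = norm (matrix_inv M *v (M *v x))" by simp
  also have "\<dots> \<le> cn TYPE('n) * norm (matrix_inv M) * norm (M *v x)" by (rule mv_norm)
  finally show ?thesis .
qed

lemma mimage_mimage: "mimage M (mimage N V) = mimage (M ** N) V"
  unfolding mimage_def by (auto simp: matrix_vector_mul_assoc image_image)

lemma invertible_Phi:
  assumes "\<forall>n. invertible (A n)"
  shows "invertible (Phi A j 0)"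
proof (induction j)
  case 0
  then show ?case by (simp add: invertible_def)
next
  case (Suc j)
  then show ?case using assms by (simp add: invertible_mult)
qed

lemma Phi_conj:
  fixes A Qs :: "nat \<Rightarrow> real^'n^'n"
  assumes "\<forall>n. invertible (Qs n)"
  shows "Phi (\<lambda>n. Qs (Suc n) ** A n ** matrix_inv (Qs n)) j 0 = Qs j ** Phi A j 0 ** matrix_inv (Qs 0)"
proof (induction j)
  case 0
  then show ?case using minv(1)[of "Qs 0"] assms by simp
next
  case (Suc j)
  have "Phi (\<lambda>n. Qs (Suc n) ** A n ** matrix_inv (Qs n)) (Suc j) 0
      = (Qs (Suc j) ** A j ** matrix_inv (Qs j)) ** (Qs j ** Phi A j 0 ** matrix_inv (Qs 0))"
    using Suc by simp
  also have "\<dots> = Qs (Suc j) ** A j ** (matrix_inv (Qs j) ** Qs j) ** Phi A j 0 ** matrix_inv (Qs 0)"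
    by (simp add: matrix_mul_assoc)
  also have "\<dots> = Qs (Suc j) ** A j ** mat 1 ** Phi A j 0 ** matrix_inv (Qs 0)"
    using minv(2)[of "Qs j"] assms by simp
  also have "\<dots> = Qs (Suc j) ** (A j ** Phi A j 0) ** matrix_inv (Qs 0)"
    by (simp add: matrix_mul_assoc)
  finally show ?case by simp
qed

lemma mimage_Phi_conj:
  fixes A Qs :: "nat \<Rightarrow> real^'n^'n"
  assumes "\<forall>n. invertible (Qs n)"
  shows "mimage (Phi (\<lambda>n. Qs (Suc n) ** A n ** matrix_inv (Qs n)) j 0) (mimage (Qs 0) V)
       = mimage (Qs j) (mimage (Phi A j 0) V)"
proof -
  have "Qs j ** Phi A j 0 ** matrix_inv (Qs 0) ** Qs 0 = Qs j ** Phi A j 0 ** (matrix_inv (Qs 0) ** Qs 0)"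
    by (simp add: matrix_mul_assoc)
  also have "\<dots> = Qs j ** Phi A j 0" using minv(2)[of "Qs 0"] assms by simp
  finally show ?thesis unfolding Phi_conj[OF assms] mimage_mimage by simp
qed

lemma sin_lower2:
  fixes t :: real
  shows "t - t^2 / 2 \<le> sin t"
proof -
  have "\<bar>sin t - (\<Sum>m<2. sin_coeff m * t ^ m)\<bar> \<le> inverse (fact 2) * \<bar>t\<bar> ^ 2"
    by (rule Maclaurin_sin_bound)
  then have "\<bar>sin t - t\<bar> * 2 \<le> t * t" by (simp add: sin_coeff_def numeral_2_eq_2)
  moreover have "t - sin t \<le> \<bar>sin t - t\<bar>" by linarith
  ultimately show "t - t^2 / 2 \<le> sin t" by (simp add: power2_eq_square)
qed

lemma arcsin_le4:
  assumes "0 \<le> x" "x \<le> 1"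
  shows "arcsin x \<le> 4 * x"
proof -
  define t where "t = arcsin x"
  have t: "0 \<le> t" "t \<le> pi / 2" "sin t = x"
    using assms arcsin_nonneg[of x] arcsin_bounded[of x] arcsin[of x] by (auto simp: t_def)
  note mb = sin_lower2[of t]
  show ?thesis
  proof (cases "t \<le> 1")
    case True
    then have "t^2 \<le> t" using t(1) by (simp add: power2_eq_square mult_left_le_one_le)
    then show ?thesis using mb t(3) t_def assms by linarith
  next
    case False
    have "sin 1 \<le> sin t"
      using False t(2) pi_ge_two by (intro sin_monotone_2pi_le) auto
    moreover have "1 - 1 / 2 \<le> sin (1::real)" using sin_lower2[of 1] by simp
    ultimately have "1/2 \<le> x" using t(3) by simp
    moreover have "t \<le> 2" using t(2) pi_less_4 by simp
    ultimately show ?thesis using t_def by simp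
  qed
qed

lemma le_arcsin:
  assumes "0 \<le> x" "x \<le> 1"
  shows "x \<le> arcsin x"
proof -
  have "sin (arcsin x) = x" using assms arcsin[of x] by auto
  moreover have "0 \<le> arcsin x" using assms by (simp add: arcsin_nonneg)
  ultimately show ?thesis using sin_x_le_x[of "arcsin x"] by simp
qed

lemma arcsin_unif:
  assumes "0 < e"
  shows "\<exists>d>0. \<forall>a b. 0 \<le> a \<and> a \<le> 1 \<and> 0 \<le> b \<and> b \<le> 1 \<and> \<bar>a - b\<bar> < d \<longrightarrow> \<bar>arcsin a - arcsin b\<bar> < e"
proof -
  have "uniformly_continuous_on {-1..1} arcsin"
    by (rule compact_uniformly_continuous[OF continuous_on_arcsin']) simp
  then obtain d where d: "d > 0" "\<forall>x\<in>{-1..1}. \<forall>x'\<in>{-1..1}. dist x' x < d \<longrightarrow> dist (arcsin x') (arcsin x) < e"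
    using assms unfolding uniformly_continuous_on_def by metis
  show ?thesis
  proof (intro exI[of _ d] conjI allI impI)
    fix a b :: real assume h: "0 \<le> a \<and> a \<le> 1 \<and> 0 \<le> b \<and> b \<le> 1 \<and> \<bar>a - b\<bar> < d"
    then have "dist a b < d" by (simp add: dist_real_def)
    then have "dist (arcsin a) (arcsin b) < e" using d(2) h by auto
    then show "\<bar>arcsin a - arcsin b\<bar> < e" by (simp add: dist_real_def)
  qed (rule d(1))
qed

lemma G_img:
  fixes X :: "(real^'n) set"
  assumes "X \<in> Grassmannian s" "1 \<le> s" "invertible M"
  shows "subspace (mimage M X)" "dim (mimage M X) = s" "unitS (mimage M X) \<noteq> {}"
proof -
  have X: "subspace X" "dim X = s" using assms(1) by (auto simp: Grassmannian_def)
  show s1: "subspace (mimage M X)" by (rule subspace_mimage[OF X(1)])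
  show s2: "dim (mimage M X) = s" using dim_mimage[OF assms(3)] X(2) by simp
  show "unitS (mimage M X) \<noteq> {}" using unitS_ne[OF s1] s2 assms(2) by simp
qed

lemma G_props:
  fixes X :: "(real^'n) set"
  assumes "X \<in> Grassmannian s" "1 \<le> s"
  shows "subspace X" "dim X = s" "unitS X \<noteq> {}"
  using assms unitS_ne[of X] by (auto simp: Grassmannian_def)

lemma lower_eventually:
  fixes Qs :: "nat \<Rightarrow> real^'n^'n"
  assumes "Qs \<longlonglongrightarrow> Q" "invertible Q"
  shows "\<exists>N0. \<forall>j\<ge>N0. \<forall>x. norm x \<le> 2 * (cn TYPE('n) * norm (matrix_inv Q)) * norm (Qs j *v x)"
proof -
  define KQ where "KQ = cn TYPE('n) * norm (matrix_inv Q)"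
  define e where "e j = cn TYPE('n) * norm (Qs j - Q)" for j
  have KQ0: "0 \<le> KQ" unfolding KQ_def using cn_pos[where 'n='n] by simp
  have "(\<lambda>j. Qs j - Q) \<longlonglongrightarrow> 0" using assms(1) by (rule LIM_zero)
  then have "(\<lambda>j. norm (Qs j - Q)) \<longlonglongrightarrow> 0" by (rule tendsto_norm_zero)
  from tendsto_mult[OF tendsto_mult[OF tendsto_const[of "cn TYPE('n)"] this] tendsto_const[of KQ]]
  have "(\<lambda>j. e j * KQ) \<longlonglongrightarrow> 0" unfolding e_def by simp
  then have "eventually (\<lambda>j. e j * KQ < 1/2) sequentially"
    by (rule order_tendstoD) simp
  then obtain N0 where N0: "\<And>j. j \<ge> N0 \<Longrightarrow> e j * KQ < 1/2" by (auto simp: eventually_sequentially)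
  have "norm x \<le> 2 * KQ * norm (Qs j *v x)" if j: "j \<ge> N0" for j x
  proof -
    have a: "norm x \<le> KQ * norm (Q *v x)" unfolding KQ_def by (rule mv_lower[OF assms(2)])
    have "Q *v x = Qs j *v x + (Q - Qs j) *v x" by (simp add: matrix_vector_mult_diff_rdistrib)
    then have "norm (Q *v x) \<le> norm (Qs j *v x) + norm ((Q - Qs j) *v x)" by (metis norm_triangle_ineq)
    also have "norm ((Q - Qs j) *v x) \<le> e j * norm x"
      unfolding e_def using mv_norm[of "Q - Qs j" x] by (simp add: norm_minus_commute)
    finally have b: "norm (Q *v x) \<le> norm (Qs j *v x) + e j * norm x" by simp
    have "KQ * norm (Q *v x) \<le> KQ * (norm (Qs j *v x) + e j * norm x)"
      using b KQ0 by (rule mult_left_mono)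
    moreover have "KQ * (e j * norm x) = (e j * KQ) * norm x" by simp
    moreover have "(e j * KQ) * norm x \<le> 1/2 * norm x"
      using N0[OF j] by (intro mult_right_mono) auto
    moreover have "KQ * (norm (Qs j *v x) + e j * norm x) = KQ * norm (Qs j *v x) + KQ * (e j * norm x)"
      by (rule distrib_left)
    moreover have "2 * KQ * norm (Qs j *v x) = 2 * (KQ * norm (Qs j *v x))" by simp
    ultimately show ?thesis using a by linarith
  qed
  then show ?thesis unfolding KQ_def by blast
qed

lemma step_bounds:
  fixes Qs :: "nat \<Rightarrow> real^'n^'n"
  assumes Qinv: "\<forall>n. invertible (Qs n)" and lim: "Qs \<longlonglongrightarrow> Q" and iQ: "invertible Q" and s: "1 \<le> s"
  shows "\<exists>\<eta> N0. \<eta> \<longlonglongrightarrow> 0 \<and> (\<forall>j. 0 \<le> \<eta> j) \<and>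
    (\<forall>j\<ge>N0. \<forall>X\<in>Grassmannian s. \<forall>Y\<in>Grassmannian s.
      gap (mimage (Qs (Suc j)) Y) (mimage (Qs j) X) \<le> gap (mimage Q Y) (mimage Q X) + \<eta> j \<and>
      gap (mimage Q Y) (mimage Q X) \<le> gap (mimage (Qs (Suc j)) Y) (mimage (Qs j) X) + \<eta> j)"
proof -
  define c where "c = cn TYPE('n)"
  define KQ where "KQ = c * norm (matrix_inv Q)"
  define e where "e j = c * norm (Qs j - Q)" for j
  define \<eta> where "\<eta> j = 2 * KQ * (e (Suc j) + e j)" for j
  have c0: "0 < c" unfolding c_def by (rule cn_pos)
  have KQ0: "0 \<le> KQ" unfolding KQ_def using c0 by simp
  have e0: "0 \<le> e j" for j unfolding e_def using c0 by simp
  have "(\<lambda>j. Qs j - Q) \<longlonglongrightarrow> 0" using lim by (rule LIM_zero)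
  then have nz: "(\<lambda>j. norm (Qs j - Q)) \<longlonglongrightarrow> 0" by (rule tendsto_norm_zero)
  then have ez: "e \<longlonglongrightarrow> 0" unfolding e_def using tendsto_mult[OF tendsto_const[of c] nz] by simp
  have ezs: "(\<lambda>j. e (Suc j)) \<longlonglongrightarrow> 0" using ez by (rule LIMSEQ_Suc)
  have "\<eta> \<longlonglongrightarrow> 2 * KQ * (0 + 0)" unfolding \<eta>_def
    by (intro tendsto_mult tendsto_const tendsto_add ez ezs)
  then have etaz: "\<eta> \<longlonglongrightarrow> 0" by simp
  have eta0: "0 \<le> \<eta> j" for j unfolding \<eta>_def using KQ0 e0 by simp
  obtain N0 where N0: "\<And>j x. j \<ge> N0 \<Longrightarrow> norm x \<le> 2 * KQ * norm (Qs j *v x)"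
    using lower_eventually[OF lim iQ] unfolding KQ_def c_def by blast
  have lowQ: "norm x \<le> KQ * norm (Q *v x)" for x unfolding KQ_def c_def by (rule mv_lower[OF iQ])
  have d1: "norm ((Qs j - Q) *v x) \<le> e j * norm x" for j x
    unfolding e_def c_def by (rule mv_norm)
  have d2: "norm ((Q - Qs j) *v x) \<le> e j * norm x" for j x
    unfolding e_def c_def using mv_norm[of "Q - Qs j" x] by (simp add: norm_minus_commute)
  have main: "gap (mimage (Qs (Suc j)) Y) (mimage (Qs j) X) \<le> gap (mimage Q Y) (mimage Q X) + \<eta> j \<and>
      gap (mimage Q Y) (mimage Q X) \<le> gap (mimage (Qs (Suc j)) Y) (mimage (Qs j) X) + \<eta> j"
    if j: "j \<ge> N0" and X: "X \<in> Grassmannian s" and Y: "Y \<in> Grassmannian s" for j X Y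
  proof -
    note sX = G_props[OF X s] and sY = G_props[OF Y s]
    note QX = G_img[OF X s iQ] and QY = G_img[OF Y s iQ]
    note XJ = G_img[OF X s Qinv[rule_format, of j]] and YJ = G_img[OF Y s Qinv[rule_format, of "Suc j"]]
    have j1: "Suc j \<ge> N0" using j by simp
    have g1: "gap (mimage (Qs (Suc j)) Y) (mimage Q Y) \<le> e (Suc j) * (2 * KQ)"
      by (rule gap_pert[OF sY(1) YJ(3) N0[OF j1] d1 e0])
    have g2: "gap (mimage Q X) (mimage (Qs j) X) \<le> e j * KQ"
      by (rule gap_pert[OF sX(1) QX(3) lowQ d2 e0])
    have g3: "gap (mimage Q Y) (mimage (Qs (Suc j)) Y) \<le> e (Suc j) * KQ"
      by (rule gap_pert[OF sY(1) QY(3) lowQ d2 e0])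
    have g4: "gap (mimage (Qs j) X) (mimage Q X) \<le> e j * (2 * KQ)"
      by (rule gap_pert[OF sX(1) XJ(3) N0[OF j] d1 e0])
    have t1: "gap (mimage (Qs (Suc j)) Y) (mimage (Qs j) X) \<le> gap (mimage (Qs (Suc j)) Y) (mimage Q Y) + gap (mimage Q Y) (mimage (Qs j) X)"
      by (rule gap_triangle[OF YJ(1) QY(1) XJ(1) YJ(3) QY(3)])
    have t2: "gap (mimage Q Y) (mimage (Qs j) X) \<le> gap (mimage Q Y) (mimage Q X) + gap (mimage Q X) (mimage (Qs j) X)"
      by (rule gap_triangle[OF QY(1) QX(1) XJ(1) QY(3) QX(3)])
    have t3: "gap (mimage Q Y) (mimage Q X) \<le> gap (mimage Q Y) (mimage (Qs (Suc j)) Y) + gap (mimage (Qs (Suc j)) Y) (mimage Q X)"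
      by (rule gap_triangle[OF QY(1) YJ(1) QX(1) QY(3) YJ(3)])
    have t4: "gap (mimage (Qs (Suc j)) Y) (mimage Q X) \<le> gap (mimage (Qs (Suc j)) Y) (mimage (Qs j) X) + gap (mimage (Qs j) X) (mimage Q X)"
      by (rule gap_triangle[OF YJ(1) XJ(1) QX(1) YJ(3) XJ(3)])
    have m1: "e (Suc j) * KQ \<le> e (Suc j) * (2 * KQ)" using e0[of "Suc j"] KQ0 by (intro mult_left_mono) auto
    have m2: "e j * KQ \<le> e j * (2 * KQ)" using e0[of j] KQ0 by (intro mult_left_mono) auto
    have eq: "\<eta> j = e (Suc j) * (2 * KQ) + e j * (2 * KQ)" unfolding \<eta>_def by (simp add: algebra_simps)
    show ?thesis using g1 g2 g3 g4 t1 t2 t3 t4 m1 m2 eq by linarith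
  qed
  show ?thesis
    by (rule exI[of _ \<eta>], rule exI[of _ N0]) (use etaz eta0 main in blast)
qed

lemma orth_norm:
  fixes Q :: "real^'n^'n"
  assumes "orthogonal_matrix Q"
  shows "norm (Q *v x) = norm x"
proof -
  have "orthogonal_transformation ((*v) Q)"
    using assms orthogonal_transformation_matrix[of "(*v) Q"]
    by (simp add: matrix_of_matrix_vector_mul matrix_vector_mul_linear)
  then show ?thesis by (rule orthogonal_transformation_norm)
qed

lemma orth_transpose:
  fixes Q :: "real^'n^'n"
  assumes "orthogonal_matrix Q"
  shows "orthogonal_matrix (transpose Q)" "transpose Q ** Q = mat 1" "invertible Q"
  using assms by (auto simp: orthogonal_matrix_def transpose_transpose invertible_def)

lemma mimage_id: "mimage (mat 1) V = V"
  by (simp add: mimage_def)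

lemma gap_orth:
  fixes X Y :: "(real^'n) set"
  assumes "X \<in> Grassmannian s" "Y \<in> Grassmannian s" "1 \<le> s" "orthogonal_matrix Q"
  shows "gap (mimage Q Y) (mimage Q X) = gap Y X"
proof -
  note ot = orth_transpose[OF assms(4)]
  note sX = G_props[OF assms(1,3)] and sY = G_props[OF assms(2,3)]
  note QX = G_img[OF assms(1,3) ot(3)] and QY = G_img[OF assms(2,3) ot(3)]
  have n1: "norm (Q *v x) \<le> 1 * norm x" "norm x \<le> 1 * norm (Q *v x)" for x
    using orth_norm[OF assms(4)] by auto
  have n2: "norm (transpose Q *v x) \<le> 1 * norm x" "norm x \<le> 1 * norm (transpose Q *v x)" for x
    using orth_norm[OF ot(1)] by auto
  have "gap (mimage Q Y) (mimage Q X) \<le> 1 * 1 * gap Y X"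
    by (rule gap_lin[OF sY(1) sX(1) sY(3) QY(3) n1]) simp
  moreover have "gap (mimage (transpose Q) (mimage Q Y)) (mimage (transpose Q) (mimage Q X))
      \<le> 1 * 1 * gap (mimage Q Y) (mimage Q X)"
  proof (rule gap_lin[OF QY(1) QX(1) QY(3) _ n2])
    show "unitS (mimage (transpose Q) (mimage Q Y)) \<noteq> {}"
      using sY(3) by (simp add: mimage_mimage ot(2) mimage_id)
  qed simp
  ultimately show ?thesis by (simp add: mimage_mimage ot(2) mimage_id)
qed

lemma gap_inv:
  fixes X Y :: "(real^'n) set"
  assumes "X \<in> Grassmannian s" "Y \<in> Grassmannian s" "1 \<le> s" "invertible Q"
  shows "gap (mimage Q Y) (mimage Q X) \<le> (cn TYPE('n) * norm Q) * (cn TYPE('n) * norm (matrix_inv Q)) * gap Y X"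
    "gap Y X \<le> (cn TYPE('n) * norm (matrix_inv Q)) * (cn TYPE('n) * norm Q) * gap (mimage Q Y) (mimage Q X)"
proof -
  note sX = G_props[OF assms(1,3)] and sY = G_props[OF assms(2,3)]
  note QX = G_img[OF assms(1,3,4)] and QY = G_img[OF assms(2,3,4)]
  have c0: "0 < cn TYPE('n)" by (rule cn_pos)
  show "gap (mimage Q Y) (mimage Q X) \<le> (cn TYPE('n) * norm Q) * (cn TYPE('n) * norm (matrix_inv Q)) * gap Y X"
  proof (rule gap_lin[OF sY(1) sX(1) sY(3) QY(3)])
    show "norm (Q *v x) \<le> cn TYPE('n) * norm Q * norm x" for x by (rule mv_norm)
    show "norm x \<le> cn TYPE('n) * norm (matrix_inv Q) * norm (Q *v x)" for x by (rule mv_lower[OF assms(4)])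
  qed (use c0 in simp)
  have bk: "mimage (matrix_inv Q) (mimage Q V) = V" for V :: "(real^'n) set"
    by (simp add: mimage_mimage minv(2)[OF assms(4)] mimage_id)
  have "gap (mimage (matrix_inv Q) (mimage Q Y)) (mimage (matrix_inv Q) (mimage Q X))
      \<le> (cn TYPE('n) * norm (matrix_inv Q)) * (cn TYPE('n) * norm Q) * gap (mimage Q Y) (mimage Q X)"
  proof (rule gap_lin[OF QY(1) QX(1) QY(3)])
    show "unitS (mimage (matrix_inv Q) (mimage Q Y)) \<noteq> {}" using sY(3) bk by simp
    show "norm (matrix_inv Q *v x) \<le> cn TYPE('n) * norm (matrix_inv Q) * norm x" for x by (rule mv_norm)
    show "norm x \<le> cn TYPE('n) * norm Q * norm (matrix_inv Q *v x)" for x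
    proof -
      have "x = Q *v (matrix_inv Q *v x)" by (simp add: matrix_vector_mul_assoc minv(1)[OF assms(4)])
      then have "norm x = norm (Q *v (matrix_inv Q *v x))" by simp
      also have "\<dots> \<le> cn TYPE('n) * norm Q * norm (matrix_inv Q *v x)" by (rule mv_norm)
      finally show ?thesis .
    qed
  qed (use c0 in simp)
  then show "gap Y X \<le> (cn TYPE('n) * norm (matrix_inv Q)) * (cn TYPE('n) * norm Q) * gap (mimage Q Y) (mimage Q X)"
    using bk by simp
qed

lemma angles_gap:
  fixes X Y :: "(real^'n) set" and Qs :: "nat \<Rightarrow> real^'n^'n"
  assumes "X \<in> Grassmannian s" "Y \<in> Grassmannian s" "1 \<le> s" "\<forall>n. invertible (Qs n)"
  shows "sub_angle X Y = arcsin (gap Y X)"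
    "sub_angle (mimage (Qs j) X) (mimage (Qs (Suc j)) Y) = arcsin (gap (mimage (Qs (Suc j)) Y) (mimage (Qs j) X))"
    "0 \<le> gap Y X" "gap Y X \<le> 1"
    "0 \<le> gap (mimage (Qs (Suc j)) Y) (mimage (Qs j) X)" "gap (mimage (Qs (Suc j)) Y) (mimage (Qs j) X) \<le> 1"
proof -
  note sX = G_props[OF assms(1,3)] and sY = G_props[OF assms(2,3)]
  note XJ = G_img[OF assms(1,3) assms(4)[rule_format, of j]]
  note YJ = G_img[OF assms(2,3) assms(4)[rule_format, of "Suc j"]]
  show "sub_angle X Y = arcsin (gap Y X)"
    by (rule sub_angle_gap) (use sX sY assms(3) in auto)
  show "sub_angle (mimage (Qs j) X) (mimage (Qs (Suc j)) Y) = arcsin (gap (mimage (Qs (Suc j)) Y) (mimage (Qs j) X))"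
    by (rule sub_angle_gap) (use XJ YJ assms(3) in auto)
  show "0 \<le> gap Y X" "gap Y X \<le> 1" using gap_props(2,3)[OF sX(1) sY(3)] by auto
  show "0 \<le> gap (mimage (Qs (Suc j)) Y) (mimage (Qs j) X)" "gap (mimage (Qs (Suc j)) Y) (mimage (Qs j) X) \<le> 1"
    using gap_props(2,3)[OF XJ(1) YJ(3)] by auto
qed

lemma angle_step_orth:
  fixes Qs :: "nat \<Rightarrow> real^'n^'n"
  assumes Qinv: "\<forall>n. invertible (Qs n)" and lim: "Qs \<longlonglongrightarrow> Q" and oQ: "orthogonal_matrix Q" and s: "1 \<le> s"
  shows "\<forall>\<epsilon>>0. \<exists>N. \<forall>j\<ge>N. \<forall>X\<in>Grassmannian s. \<forall>Y\<in>Grassmannian s.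
    \<bar>sub_angle (mimage (Qs j) X) (mimage (Qs (Suc j)) Y) - sub_angle X Y\<bar> \<le> \<epsilon>"
proof (intro allI impI)
  fix \<epsilon> :: real assume ep: "\<epsilon> > 0"
  have iQ: "invertible Q" using orth_transpose[OF oQ] by blast
  obtain \<eta> N0 where eta: "\<eta> \<longlonglongrightarrow> 0" "\<forall>j. 0 \<le> \<eta> j"
    "\<forall>j\<ge>N0. \<forall>X\<in>Grassmannian s. \<forall>Y\<in>Grassmannian s.
      gap (mimage (Qs (Suc j)) Y) (mimage (Qs j) X) \<le> gap (mimage Q Y) (mimage Q X) + \<eta> j \<and>
      gap (mimage Q Y) (mimage Q X) \<le> gap (mimage (Qs (Suc j)) Y) (mimage (Qs j) X) + \<eta> j"
    using step_bounds[OF Qinv lim iQ s] by blast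
  obtain d where d: "d > 0" "\<forall>a b. 0 \<le> a \<and> a \<le> 1 \<and> 0 \<le> b \<and> b \<le> 1 \<and> \<bar>a - b\<bar> < d \<longrightarrow> \<bar>arcsin a - arcsin b\<bar> < \<epsilon>"
    using arcsin_unif[OF ep] by blast
  have "eventually (\<lambda>j. \<eta> j < d) sequentially" using eta(1) d(1) by (rule order_tendstoD)
  then obtain N1 where N1: "\<And>j. j \<ge> N1 \<Longrightarrow> \<eta> j < d" by (auto simp: eventually_sequentially)
  show "\<exists>N. \<forall>j\<ge>N. \<forall>X\<in>Grassmannian s. \<forall>Y\<in>Grassmannian s.
    \<bar>sub_angle (mimage (Qs j) X) (mimage (Qs (Suc j)) Y) - sub_angle X Y\<bar> \<le> \<epsilon>"
  proof (intro exI[of _ "max N0 N1"] allI impI ballI)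
    fix j and X Y :: "(real^'n) set" assume j: "max N0 N1 \<le> j" and X: "X \<in> Grassmannian s" and Y: "Y \<in> Grassmannian s"
    note ag = angles_gap(1)[OF X Y s Qinv] angles_gap(2)[OF X Y s Qinv, of j] angles_gap(3,4)[OF X Y s Qinv] angles_gap(5,6)[OF X Y s Qinv, of j]
    have go: "gap (mimage Q Y) (mimage Q X) = gap Y X" by (rule gap_orth[OF X Y s oQ])
    have b: "\<bar>gap (mimage (Qs (Suc j)) Y) (mimage (Qs j) X) - gap Y X\<bar> < d"
      using eta(3)[rule_format, of j X Y] j X Y go N1[of j] by auto
    show "\<bar>sub_angle (mimage (Qs j) X) (mimage (Qs (Suc j)) Y) - sub_angle X Y\<bar> \<le> \<epsilon>"
      using d(2)[rule_format, OF conjI[OF ag(5) conjI[OF ag(6) conjI[OF ag(3) conjI[OF ag(4) b]]]]]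
      unfolding ag(1,2) by simp
  qed
qed

lemma angle_step_inv:
  fixes Qs :: "nat \<Rightarrow> real^'n^'n"
  assumes Qinv: "\<forall>n. invertible (Qs n)" and lim: "Qs \<longlonglongrightarrow> Q" and iQ: "invertible Q" and s: "1 \<le> s"
  shows "\<exists>C>0. \<forall>\<epsilon>>0. \<exists>N. \<forall>j\<ge>N. \<forall>X\<in>Grassmannian s. \<forall>Y\<in>Grassmannian s.
    sub_angle (mimage (Qs j) X) (mimage (Qs (Suc j)) Y) \<le> C * sub_angle X Y + \<epsilon> \<and>
    sub_angle X Y \<le> C * sub_angle (mimage (Qs j) X) (mimage (Qs (Suc j)) Y) + \<epsilon>"
proof -
  define K1 where "K1 = (cn TYPE('n) * norm Q) * (cn TYPE('n) * norm (matrix_inv Q))"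
  define K2 where "K2 = (cn TYPE('n) * norm (matrix_inv Q)) * (cn TYPE('n) * norm Q)"
  have c0: "0 < cn TYPE('n)" by (rule cn_pos)
  have K1: "0 \<le> K1" unfolding K1_def using c0 by simp
  have K2: "0 \<le> K2" unfolding K2_def using c0 by simp
  define C where "C = 4 * (K1 + K2) + 1"
  have C: "C > 0" "4 * K1 \<le> C" "4 * K2 \<le> C" unfolding C_def using K1 K2 by auto
  obtain \<eta> N0 where eta: "\<eta> \<longlonglongrightarrow> 0" "\<forall>j. 0 \<le> \<eta> j"
    "\<forall>j\<ge>N0. \<forall>X\<in>Grassmannian s. \<forall>Y\<in>Grassmannian s.
      gap (mimage (Qs (Suc j)) Y) (mimage (Qs j) X) \<le> gap (mimage Q Y) (mimage Q X) + \<eta> j \<and>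
      gap (mimage Q Y) (mimage Q X) \<le> gap (mimage (Qs (Suc j)) Y) (mimage (Qs j) X) + \<eta> j"
    using step_bounds[OF Qinv lim iQ s] by blast
  have "\<forall>\<epsilon>>0. \<exists>N. \<forall>j\<ge>N. \<forall>X\<in>Grassmannian s. \<forall>Y\<in>Grassmannian s.
    sub_angle (mimage (Qs j) X) (mimage (Qs (Suc j)) Y) \<le> C * sub_angle X Y + \<epsilon> \<and>
    sub_angle X Y \<le> C * sub_angle (mimage (Qs j) X) (mimage (Qs (Suc j)) Y) + \<epsilon>"
  proof (intro allI impI)
    fix \<epsilon> :: real assume ep: "\<epsilon> > 0"
    have "(\<lambda>j. (4 + 4 * K2) * \<eta> j) \<longlonglongrightarrow> (4 + 4 * K2) * 0"
      by (intro tendsto_mult tendsto_const eta(1))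
    then have "eventually (\<lambda>j. (4 + 4 * K2) * \<eta> j < \<epsilon>) sequentially"
      using ep by (intro order_tendstoD) auto
    then obtain N1 where N1: "\<And>j. j \<ge> N1 \<Longrightarrow> (4 + 4 * K2) * \<eta> j < \<epsilon>" by (auto simp: eventually_sequentially)
    show "\<exists>N. \<forall>j\<ge>N. \<forall>X\<in>Grassmannian s. \<forall>Y\<in>Grassmannian s.
      sub_angle (mimage (Qs j) X) (mimage (Qs (Suc j)) Y) \<le> C * sub_angle X Y + \<epsilon> \<and>
      sub_angle X Y \<le> C * sub_angle (mimage (Qs j) X) (mimage (Qs (Suc j)) Y) + \<epsilon>"
    proof (intro exI[of _ "max N0 N1"] allI impI ballI)
      fix j and X Y :: "(real^'n) set" assume j: "max N0 N1 \<le> j" and X: "X \<in> Grassmannian s" and Y: "Y \<in> Grassmannian s"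
      note ag = angles_gap(1)[OF X Y s Qinv] angles_gap(2)[OF X Y s Qinv, of j] angles_gap(3,4)[OF X Y s Qinv] angles_gap(5,6)[OF X Y s Qinv, of j]
      define g where "g = gap Y X"
      define gt where "gt = gap (mimage (Qs (Suc j)) Y) (mimage (Qs j) X)"
      define gq where "gq = gap (mimage Q Y) (mimage Q X)"
      have gi: "gq \<le> K1 * g" "g \<le> K2 * gq" unfolding gq_def g_def K1_def K2_def
        using gap_inv[OF X Y s iQ] by auto
      have st: "gt \<le> gq + \<eta> j" "gq \<le> gt + \<eta> j" unfolding gt_def gq_def
        using eta(3)[rule_format, of j X Y] j X Y by auto
      have e0: "0 \<le> \<eta> j" using eta(2) by blast
      have ee: "(4 + 4 * K2) * \<eta> j < \<epsilon>" using N1 j by simp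
      have g01: "0 \<le> g" "g \<le> 1" "0 \<le> gt" "gt \<le> 1" using ag(3-6) unfolding g_def gt_def by auto
      have A1: "sub_angle X Y = arcsin g" "sub_angle (mimage (Qs j) X) (mimage (Qs (Suc j)) Y) = arcsin gt"
        using ag(1,2) unfolding g_def gt_def by auto
      have as1: "arcsin gt \<le> 4 * gt" "arcsin g \<le> 4 * g" using arcsin_le4 g01 by auto
      have as2: "g \<le> arcsin g" "gt \<le> arcsin gt" using le_arcsin g01 by auto
      have ag0: "0 \<le> arcsin g" "0 \<le> arcsin gt" using g01 as2 by auto
      have p1: "K1 * g \<le> K1 * arcsin g" using as2(1) K1 by (rule mult_left_mono)
      have p2: "4 * K1 * arcsin g \<le> C * arcsin g" using C(2) ag0(1) by (rule mult_right_mono)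
      have p3: "K2 * gq \<le> K2 * (gt + \<eta> j)" using st(2) K2 by (rule mult_left_mono)
      have p4: "K2 * gt \<le> K2 * arcsin gt" using as2(2) K2 by (rule mult_left_mono)
      have p5: "4 * K2 * arcsin gt \<le> C * arcsin gt" using C(3) ag0(2) by (rule mult_right_mono)
      have p6: "K2 * (gt + \<eta> j) = K2 * gt + K2 * \<eta> j" by (simp add: algebra_simps)
      have p7: "(4 + 4 * K2) * \<eta> j = 4 * \<eta> j + 4 * (K2 * \<eta> j)" by (simp add: algebra_simps)
      have p8: "4 * K1 * arcsin g = 4 * (K1 * arcsin g)" "4 * K2 * arcsin gt = 4 * (K2 * arcsin gt)" by simp_all
      have "K2 * \<eta> j \<ge> 0" using K2 e0 by simp
      then show "sub_angle (mimage (Qs j) X) (mimage (Qs (Suc j)) Y) \<le> C * sub_angle X Y + \<epsilon> \<and>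
        sub_angle X Y \<le> C * sub_angle (mimage (Qs j) X) (mimage (Qs (Suc j)) Y) + \<epsilon>"
        unfolding A1 using as1 gi st p1 p2 p3 p4 p5 p6 p7 p8 ee e0 by linarith
    qed
  qed
  then show ?thesis using C(1) by blast
qed

lemma lim_scale_ereal:
  fixes x y :: "nat \<Rightarrow> ereal"
  assumes C: "0 \<le> C" and h: "\<forall>\<epsilon>>0. \<exists>N. \<forall>n\<ge>N. x n \<le> ereal C * y n + ereal \<epsilon>"
  shows "limsup x \<le> ereal C * limsup y" "liminf x \<le> ereal C * liminf y"
proof -
  have ev: "eventually (\<lambda>n. x n \<le> ereal C * y n + ereal e) sequentially" if "e > 0" for e
    using h that by (auto simp: eventually_sequentially)
  show "limsup x \<le> ereal C * limsup y"
  proof (rule ereal_le_epsilon2)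
    fix e :: real assume e: "0 < e"
    have "limsup x \<le> limsup (\<lambda>n. ereal C * y n + ereal e)" by (rule Limsup_mono[OF ev[OF e]])
    also have "\<dots> = limsup (\<lambda>n. ereal C * y n) + ereal e"
      by (rule Limsup_add_ereal_right) simp_all
    also have "limsup (\<lambda>n. ereal C * y n) = ereal C * limsup y"
      by (rule Limsup_ereal_mult_left[OF _ C]) simp
    finally show "limsup x \<le> ereal C * limsup y + ereal e" .
  qed
  show "liminf x \<le> ereal C * liminf y"
  proof (rule ereal_le_epsilon2)
    fix e :: real assume e: "0 < e"
    have "liminf x \<le> liminf (\<lambda>n. ereal C * y n + ereal e)" by (rule Liminf_mono[OF ev[OF e]])
    also have "\<dots> = liminf (\<lambda>n. ereal C * y n) + ereal e"
      by (rule Liminf_add_ereal_right) simp_all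
    also have "liminf (\<lambda>n. ereal C * y n) = ereal C * liminf y"
      by (rule Liminf_ereal_mult_left[OF _ C]) simp
    finally show "liminf x \<le> ereal C * liminf y + ereal e" .
  qed
qed

lemma sup_scale:
  fixes F G :: "nat \<Rightarrow> 'a \<Rightarrow> real"
  assumes C: "0 \<le> C" and G0: "\<forall>n. \<forall>V\<in>S. 0 \<le> G n V"
    and h: "\<forall>\<epsilon>>0. \<exists>N. \<forall>n\<ge>N. \<forall>V\<in>S. F n V \<le> C * G n V + \<epsilon>"
  shows "\<forall>\<epsilon>>0. \<exists>N. \<forall>n\<ge>N. (SUP V\<in>S. ereal (F n V)) \<le> ereal C * (SUP V\<in>S. ereal (G n V)) + ereal \<epsilon>"
proof (intro allI impI)
  fix \<epsilon> :: real assume "\<epsilon> > 0"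
  then obtain N where N: "\<forall>n\<ge>N. \<forall>V\<in>S. F n V \<le> C * G n V + \<epsilon>" using h by blast
  show "\<exists>N. \<forall>n\<ge>N. (SUP V\<in>S. ereal (F n V)) \<le> ereal C * (SUP V\<in>S. ereal (G n V)) + ereal \<epsilon>"
  proof (intro exI[of _ N] allI impI)
    fix n assume n: "n \<ge> N"
    show "(SUP V\<in>S. ereal (F n V)) \<le> ereal C * (SUP V\<in>S. ereal (G n V)) + ereal \<epsilon>"
    proof (rule SUP_least)
      fix V assume V: "V \<in> S"
      have "ereal (F n V) \<le> ereal C * ereal (G n V) + ereal \<epsilon>" using N n V by simp
      also have "ereal C * ereal (G n V) \<le> ereal C * (SUP V\<in>S. ereal (G n V))"
        by (rule ereal_mult_left_mono) (use V C in \<open>auto intro: SUP_upper\<close>)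
      finally show "ereal (F n V) \<le> ereal C * (SUP V\<in>S. ereal (G n V)) + ereal \<epsilon>"
        by (simp add: add_right_mono)
    qed
  qed
qed

lemma thetas_le:
  fixes F G :: "nat \<Rightarrow> 'a \<Rightarrow> real"
  assumes C: "0 \<le> C" and G0: "\<forall>n. \<forall>V\<in>S. 0 \<le> G n V"
    and h: "\<forall>\<epsilon>>0. \<exists>N. \<forall>n\<ge>N. \<forall>V\<in>S. F n V \<le> C * G n V + \<epsilon>"
  shows "\<And>V. V \<in> S \<Longrightarrow> limsup (\<lambda>n. ereal (F n V)) \<le> ereal C * limsup (\<lambda>n. ereal (G n V))"
    "\<And>V. V \<in> S \<Longrightarrow> liminf (\<lambda>n. ereal (F n V)) \<le> ereal C * liminf (\<lambda>n. ereal (G n V))"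
    "limsup (\<lambda>n. SUP V\<in>S. ereal (F n V)) \<le> ereal C * limsup (\<lambda>n. SUP V\<in>S. ereal (G n V))"
    "liminf (\<lambda>n. SUP V\<in>S. ereal (F n V)) \<le> ereal C * liminf (\<lambda>n. SUP V\<in>S. ereal (G n V))"
proof -
  have pw: "\<forall>\<epsilon>>0. \<exists>N. \<forall>n\<ge>N. ereal (F n V) \<le> ereal C * ereal (G n V) + ereal \<epsilon>" if V: "V \<in> S" for V
  proof (intro allI impI)
    fix \<epsilon> :: real assume "\<epsilon> > 0"
    then obtain N where N: "\<forall>n\<ge>N. \<forall>V\<in>S. F n V \<le> C * G n V + \<epsilon>" using h by blast
    then show "\<exists>N. \<forall>n\<ge>N. ereal (F n V) \<le> ereal C * ereal (G n V) + ereal \<epsilon>" using V by auto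
  qed
  show "limsup (\<lambda>n. ereal (F n V)) \<le> ereal C * limsup (\<lambda>n. ereal (G n V))" if "V \<in> S" for V
    by (rule lim_scale_ereal(1)[OF C pw[OF that]])
  show "liminf (\<lambda>n. ereal (F n V)) \<le> ereal C * liminf (\<lambda>n. ereal (G n V))" if "V \<in> S" for V
    by (rule lim_scale_ereal(2)[OF C pw[OF that]])
  show "limsup (\<lambda>n. SUP V\<in>S. ereal (F n V)) \<le> ereal C * limsup (\<lambda>n. SUP V\<in>S. ereal (G n V))"
    by (rule lim_scale_ereal(1)[OF C sup_scale[OF C G0 h]])
  show "liminf (\<lambda>n. SUP V\<in>S. ereal (F n V)) \<le> ereal C * liminf (\<lambda>n. SUP V\<in>S. ereal (G n V))"
    by (rule lim_scale_ereal(2)[OF C sup_scale[OF C G0 h]])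
qed

lemma thetas_eq:
  fixes F G :: "nat \<Rightarrow> 'a \<Rightarrow> real"
  assumes F0: "\<forall>n. \<forall>V\<in>S. 0 \<le> F n V" and G0: "\<forall>n. \<forall>V\<in>S. 0 \<le> G n V"
    and h: "\<forall>\<epsilon>>0. \<exists>N. \<forall>n\<ge>N. \<forall>V\<in>S. \<bar>F n V - G n V\<bar> \<le> \<epsilon>"
  shows "(SUP V\<in>S. limsup (\<lambda>n. ereal (F n V))) = (SUP V\<in>S. limsup (\<lambda>n. ereal (G n V)))"
    "(SUP V\<in>S. liminf (\<lambda>n. ereal (F n V))) = (SUP V\<in>S. liminf (\<lambda>n. ereal (G n V)))"
    "limsup (\<lambda>n. SUP V\<in>S. ereal (F n V)) = limsup (\<lambda>n. SUP V\<in>S. ereal (G n V))"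
    "liminf (\<lambda>n. SUP V\<in>S. ereal (F n V)) = liminf (\<lambda>n. SUP V\<in>S. ereal (G n V))"
proof -
  have h1: "\<forall>\<epsilon>>0. \<exists>N. \<forall>n\<ge>N. \<forall>V\<in>S. F n V \<le> 1 * G n V + \<epsilon>"
  proof (intro allI impI)
    fix \<epsilon> :: real assume "\<epsilon> > 0"
    then obtain N where "\<forall>n\<ge>N. \<forall>V\<in>S. \<bar>F n V - G n V\<bar> \<le> \<epsilon>" using h by blast
    then show "\<exists>N. \<forall>n\<ge>N. \<forall>V\<in>S. F n V \<le> 1 * G n V + \<epsilon>" by force
  qed
  have h2: "\<forall>\<epsilon>>0. \<exists>N. \<forall>n\<ge>N. \<forall>V\<in>S. G n V \<le> 1 * F n V + \<epsilon>"
  proof (intro allI impI)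
    fix \<epsilon> :: real assume "\<epsilon> > 0"
    then obtain N where "\<forall>n\<ge>N. \<forall>V\<in>S. \<bar>F n V - G n V\<bar> \<le> \<epsilon>" using h by blast
    then show "\<exists>N. \<forall>n\<ge>N. \<forall>V\<in>S. G n V \<le> 1 * F n V + \<epsilon>" by force
  qed
  note a = thetas_le[OF _ G0 h1] and b = thetas_le[OF _ F0 h2]
  show "(SUP V\<in>S. limsup (\<lambda>n. ereal (F n V))) = (SUP V\<in>S. limsup (\<lambda>n. ereal (G n V)))"
    by (rule SUP_cong[OF refl], rule antisym) (use a(1) b(1) in \<open>auto simp: one_ereal_def[symmetric]\<close>)
  show "(SUP V\<in>S. liminf (\<lambda>n. ereal (F n V))) = (SUP V\<in>S. liminf (\<lambda>n. ereal (G n V)))"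
    by (rule SUP_cong[OF refl], rule antisym) (use a(2) b(2) in \<open>auto simp: one_ereal_def[symmetric]\<close>)
  show "limsup (\<lambda>n. SUP V\<in>S. ereal (F n V)) = limsup (\<lambda>n. SUP V\<in>S. ereal (G n V))"
    by (rule antisym) (use a(3) b(3) in \<open>auto simp: one_ereal_def[symmetric]\<close>)
  show "liminf (\<lambda>n. SUP V\<in>S. ereal (F n V)) = liminf (\<lambda>n. SUP V\<in>S. ereal (G n V))"
    by (rule antisym) (use a(4) b(4) in \<open>auto simp: one_ereal_def[symmetric]\<close>)
qed

lemma thetas_zero:
  fixes F G :: "nat \<Rightarrow> 'a \<Rightarrow> real"
  assumes C: "0 \<le> C" and F0: "\<forall>n. \<forall>V\<in>S. 0 \<le> F n V" and G0: "\<forall>n. \<forall>V\<in>S. 0 \<le> G n V"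
    and h: "\<forall>\<epsilon>>0. \<exists>N. \<forall>n\<ge>N. \<forall>V\<in>S. F n V \<le> C * G n V + \<epsilon>"
  shows "(SUP V\<in>S. limsup (\<lambda>n. ereal (G n V))) = 0 \<Longrightarrow> (SUP V\<in>S. limsup (\<lambda>n. ereal (F n V))) = 0"
    "(SUP V\<in>S. liminf (\<lambda>n. ereal (G n V))) = 0 \<Longrightarrow> (SUP V\<in>S. liminf (\<lambda>n. ereal (F n V))) = 0"
    "limsup (\<lambda>n. SUP V\<in>S. ereal (G n V)) = 0 \<Longrightarrow> limsup (\<lambda>n. SUP V\<in>S. ereal (F n V)) = 0"
    "liminf (\<lambda>n. SUP V\<in>S. ereal (G n V)) = 0 \<Longrightarrow> liminf (\<lambda>n. SUP V\<in>S. ereal (F n V)) = 0"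
proof -
  note a = thetas_le[OF C G0 h]
  have Cm: "ereal C * x \<le> 0" if "x \<le> 0" for x :: ereal
    using ereal_mult_left_mono[OF that, of "ereal C"] C by simp
  have ne: "S \<noteq> {}" if "(SUP V\<in>S. f V) = (0::ereal)" for f
    using that by (auto simp: bot_ereal_def)
  have Fs0: "0 \<le> (SUP V\<in>S. ereal (F n V))" if nS: "S \<noteq> {}" for n
  proof -
    obtain V where "V \<in> S" using nS by blast
    then have "ereal (F n V) \<le> (SUP V\<in>S. ereal (F n V))" by (rule SUP_upper)
    then show ?thesis using F0 \<open>V \<in> S\<close> by (meson ereal_less_eq(5) order_trans)
  qed
  show "(SUP V\<in>S. limsup (\<lambda>n. ereal (F n V))) = 0" if z: "(SUP V\<in>S. limsup (\<lambda>n. ereal (G n V))) = 0"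
  proof -
    have "limsup (\<lambda>n. ereal (F n V)) = 0" if V: "V \<in> S" for V
    proof (rule antisym)
      have "limsup (\<lambda>n. ereal (G n V)) \<le> 0" using z SUP_upper[OF V, of "\<lambda>V. limsup (\<lambda>n. ereal (G n V))"] by simp
      then show "limsup (\<lambda>n. ereal (F n V)) \<le> 0" using a(1)[OF V] Cm by (meson order_trans)
      show "0 \<le> limsup (\<lambda>n. ereal (F n V))" by (rule le_Limsup) (use F0 V in auto)
    qed
    then show ?thesis using ne[OF z] by simp
  qed
  show "(SUP V\<in>S. liminf (\<lambda>n. ereal (F n V))) = 0" if z: "(SUP V\<in>S. liminf (\<lambda>n. ereal (G n V))) = 0"
  proof -
    have "liminf (\<lambda>n. ereal (F n V)) = 0" if V: "V \<in> S" for V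
    proof (rule antisym)
      have "liminf (\<lambda>n. ereal (G n V)) \<le> 0" using z SUP_upper[OF V, of "\<lambda>V. liminf (\<lambda>n. ereal (G n V))"] by simp
      then show "liminf (\<lambda>n. ereal (F n V)) \<le> 0" using a(2)[OF V] Cm by (meson order_trans)
      show "0 \<le> liminf (\<lambda>n. ereal (F n V))" by (rule Liminf_bounded) (use F0 V in auto)
    qed
    then show ?thesis using ne[OF z] by simp
  qed
  show "limsup (\<lambda>n. SUP V\<in>S. ereal (F n V)) = 0" if z: "limsup (\<lambda>n. SUP V\<in>S. ereal (G n V)) = 0"
  proof -
    have "S \<noteq> {}" using z by (auto simp: bot_ereal_def Limsup_const Liminf_const)
    show ?thesis
    proof (rule antisym)
      show "limsup (\<lambda>n. SUP V\<in>S. ereal (F n V)) \<le> 0" using a(3) z Cm[of 0] by simp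
      show "0 \<le> limsup (\<lambda>n. SUP V\<in>S. ereal (F n V))" by (rule le_Limsup) (use Fs0[OF \<open>S \<noteq> {}\<close>] in auto)
    qed
  qed
  show "liminf (\<lambda>n. SUP V\<in>S. ereal (F n V)) = 0" if z: "liminf (\<lambda>n. SUP V\<in>S. ereal (G n V)) = 0"
  proof -
    have "S \<noteq> {}" using z by (auto simp: bot_ereal_def Limsup_const Liminf_const)
    show ?thesis
    proof (rule antisym)
      show "liminf (\<lambda>n. SUP V\<in>S. ereal (F n V)) \<le> 0" using a(4) z Cm[of 0] by simp
      show "0 \<le> liminf (\<lambda>n. SUP V\<in>S. ereal (F n V))" by (rule Liminf_bounded) (use Fs0[OF \<open>S \<noteq> {}\<close>] in auto)
    qed
  qed
qed

lemma cesaro_unif: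
  fixes d :: "'a \<Rightarrow> nat \<Rightarrow> real"
  assumes B: "\<forall>V\<in>S. \<forall>j. d V j \<le> B" and h: "\<forall>\<epsilon>>0. \<exists>N. \<forall>j\<ge>N. \<forall>V\<in>S. d V j \<le> \<epsilon>"
  shows "\<forall>\<epsilon>>0. \<exists>N. \<forall>n\<ge>N. \<forall>V\<in>S. (\<Sum>j<n. d V j) / real n \<le> \<epsilon>"
proof (intro allI impI)
  fix \<epsilon> :: real assume ep: "\<epsilon> > 0"
  obtain N where N: "\<forall>j\<ge>N. \<forall>V\<in>S. d V j \<le> \<epsilon> / 2" using h ep by (meson half_gt_zero)
  define B' where "B' = \<bar>B\<bar>"
  define M where "M = max (max N 1) (nat \<lceil>2 * real N * B' / \<epsilon>\<rceil>)"
  show "\<exists>N. \<forall>n\<ge>N. \<forall>V\<in>S. (\<Sum>j<n. d V j) / real n \<le> \<epsilon>"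
  proof (intro exI[of _ M] allI impI ballI)
    fix n V assume n: "M \<le> n" and V: "V \<in> S"
    have nN: "N \<le> n" and n1: "1 \<le> n" using n unfolding M_def by auto
    have "real (nat \<lceil>2 * real N * B' / \<epsilon>\<rceil>) \<le> real n" using n unfolding M_def by linarith
    then have "2 * real N * B' / \<epsilon> \<le> real n" by linarith
    then have nb: "2 * real N * B' \<le> real n * \<epsilon>" using ep by (simp add: divide_le_eq)
    have "(\<Sum>j<n. d V j) = (\<Sum>j\<in>{0..<N}. d V j) + (\<Sum>j\<in>{N..<n}. d V j)"
      using sum.atLeastLessThan_concat[of 0 N n "d V"] nN by (simp add: atLeast0LessThan)
    also have "(\<Sum>j\<in>{0..<N}. d V j) \<le> real (card {0..<N}) * B'"
    proof (rule sum_bounded_above)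
      fix i assume "i \<in> {0..<N}"
      have "d V i \<le> B" using B V by blast
      then show "d V i \<le> B'" unfolding B'_def by linarith
    qed
    also have "(\<Sum>j\<in>{N..<n}. d V j) \<le> real (card {N..<n}) * (\<epsilon> / 2)"
      by (rule sum_bounded_above) (use N V in auto)
    finally have "(\<Sum>j<n. d V j) \<le> real N * B' + real (n - N) * (\<epsilon> / 2)" by simp
    also have "real (n - N) * (\<epsilon> / 2) \<le> real n * (\<epsilon> / 2)" using ep nN by (intro mult_right_mono) auto
    finally have "(\<Sum>j<n. d V j) \<le> real n * \<epsilon>" using nb by simp
    then show "(\<Sum>j<n. d V j) / real n \<le> \<epsilon>" using n1 by (simp add: divide_le_eq mult.commute)
  qed
qed

lemma sum_shift1: "(\<Sum>j=1..n. u j) = (\<Sum>j<n. u (Suc j))"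
  by (induction n) simp_all

lemma G_mem:
  fixes X :: "(real^'n) set"
  assumes "X \<in> Grassmannian s" "1 \<le> s" "invertible M"
  shows "mimage M X \<in> Grassmannian s"
  using G_img[OF assms] by (simp add: Grassmannian_def)

lemma angle_bounds:
  fixes X Y :: "(real^'n) set"
  assumes "X \<in> Grassmannian s" "Y \<in> Grassmannian s" "1 \<le> s"
  shows "0 \<le> sub_angle X Y" "sub_angle X Y \<le> pi / 2"
proof -
  have "\<forall>n. invertible (mat 1 :: real^'n^'n)" by (simp add: invertible_def)
  note ag = angles_gap(1,3,4)[OF assms this]
  show "0 \<le> sub_angle X Y" unfolding ag(1) using ag(2,3) by (simp add: arcsin_nonneg)
  show "sub_angle X Y \<le> pi / 2" unfolding ag(1) using ag(2,3) arcsin_ubound[of "gap Y X"] by linarith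
qed

lemma G_image:
  fixes M :: "real^'n^'n"
  assumes "invertible M" "1 \<le> s"
  shows "mimage M ` Grassmannian s = Grassmannian s"
proof
  show "mimage M ` Grassmannian s \<subseteq> Grassmannian s" using G_mem[OF _ assms(2,1)] by blast
  show "Grassmannian s \<subseteq> mimage M ` Grassmannian s"
  proof
    fix W :: "(real^'n) set" assume W: "W \<in> Grassmannian s"
    have inv': "invertible (matrix_inv M)" using minv[OF assms(1)] by (auto simp: invertible_def)
    have "W = mimage M (mimage (matrix_inv M) W)"
      by (simp add: mimage_mimage minv(1)[OF assms(1)] mimage_id)
    moreover have "mimage (matrix_inv M) W \<in> Grassmannian s" by (rule G_mem[OF W assms(2) inv'])
    ultimately show "W \<in> mimage M ` Grassmannian s" by blast
  qed
qed

lemma mimage_scalar: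
  fixes X :: "(real^'n) set"
  assumes "subspace X" "c \<noteq> 0"
  shows "mimage (c *\<^sub>R mat 1) X = X"
proof -
  have eq: "(c *\<^sub>R mat 1) *v x = c *\<^sub>R x" for x :: "real^'n"
    by (metis scaleR_matrix_vector_assoc matrix_vector_mul_lid)
  show ?thesis unfolding mimage_def eq
  proof
    show "(\<lambda>v. c *\<^sub>R v) ` X \<subseteq> X" using assms(1) by (auto simp: subspace_scale)
    show "X \<subseteq> (\<lambda>v. c *\<^sub>R v) ` X"
    proof
      fix x assume "x \<in> X"
      then have "(1/c) *\<^sub>R x \<in> X" using assms(1) by (simp add: subspace_scale)
      moreover have "x = c *\<^sub>R ((1/c) *\<^sub>R x)" using assms(2) by simp
      ultimately show "x \<in> (\<lambda>v. c *\<^sub>R v) ` X" by blast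
    qed
  qed
qed

theorem proposition4p3:
  fixes A Qs :: "nat \<Rightarrow> real^'n^'n" and s :: nat
  assumes A_inv: "\<forall>n. invertible (A n)"
    and A_bdd: "\<exists>C. \<forall>n. norm (A n) \<le> C \<and> norm (matrix_inv (A n)) \<le> C"
    and Q_inv: "\<forall>n. invertible (Qs n)"
    and s: "1 \<le> s" "s \<le> CARD('n)"
  defines "At \<equiv> (\<lambda>n. Qs (Suc n) ** A n ** matrix_inv (Qs n))"
  shows
   "((\<exists>q :: nat \<Rightarrow> real. (\<forall>n. q n \<noteq> 0 \<and> Qs n = q n *\<^sub>R mat 1)) \<longrightarrow>
       theta_sup_limsup s A = theta_sup_limsup s At \<and>
       theta_sup_liminf s A = theta_sup_liminf s At \<and>
       theta_limsup_sup s A = theta_limsup_sup s At \<and>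
       theta_liminf_sup s A = theta_liminf_sup s At)
    \<and> (\<forall>Q. Qs \<longlonglongrightarrow> Q \<and> orthogonal_matrix Q \<longrightarrow>
       theta_sup_limsup s A = theta_sup_limsup s At \<and>
       theta_sup_liminf s A = theta_sup_liminf s At \<and>
       theta_limsup_sup s A = theta_limsup_sup s At \<and>
       theta_liminf_sup s A = theta_liminf_sup s At)
    \<and> (\<forall>Q. Qs \<longlonglongrightarrow> Q \<and> invertible Q \<longrightarrow>
       (theta_sup_limsup s A = 0 \<longleftrightarrow> theta_sup_limsup s At = 0) \<and>
       (theta_sup_liminf s A = 0 \<longleftrightarrow> theta_sup_liminf s At = 0) \<and>
       (theta_limsup_sup s A = 0 \<longleftrightarrow> theta_limsup_sup s At = 0) \<and>
       (theta_liminf_sup s A = 0 \<longleftrightarrow> theta_liminf_sup s At = 0))"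
proof -
  have s1: "1 \<le> s" by (rule s(1))
  define Xs where "Xs V j = mimage (Phi A j 0) V" for V :: "(real^'n) set" and j
  define ta where "ta V j = sub_angle (mimage (Qs j) (Xs V j)) (mimage (Qs (Suc j)) (Xs V (Suc j)))" for V j
  define aa where "aa V j = sub_angle (Xs V j) (Xs V (Suc j))" for V j
  define F where "F n V = (\<Sum>j<n. ta V j) / real n" for n V
  define Gf where "Gf n V = (\<Sum>j<n. aa V j) / real n" for n V
  have XG: "Xs V j \<in> Grassmannian s" if "V \<in> Grassmannian s" for V j
    unfolding Xs_def by (rule G_mem[OF that s1 invertible_Phi[OF A_inv]])
  have QXG: "mimage (Qs i) (Xs V j) \<in> Grassmannian s" if "V \<in> Grassmannian s" for V i j
    by (rule G_mem[OF XG[OF that] s1 Q_inv[rule_format]])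
  have tab: "0 \<le> ta V j" "ta V j \<le> pi / 2" if "V \<in> Grassmannian s" for V j
    unfolding ta_def using angle_bounds[OF QXG[OF that] QXG[OF that] s1] by auto
  have aab: "0 \<le> aa V j" "aa V j \<le> pi / 2" if "V \<in> Grassmannian s" for V j
    unfolding aa_def using angle_bounds[OF XG[OF that] XG[OF that] s1] by auto
  have F0: "\<forall>n. \<forall>V\<in>Grassmannian s. 0 \<le> F n V"
    unfolding F_def using tab by (auto intro!: divide_nonneg_nonneg sum_nonneg)
  have G0: "\<forall>n. \<forall>V\<in>Grassmannian s. 0 \<le> Gf n V"
    unfolding Gf_def using aab by (auto intro!: divide_nonneg_nonneg sum_nonneg)
  have a1A: "a1n A n V / real n = Gf n V" for n V
    unfolding a1n_def Gf_def aa_def Xs_def sum_shift1 by simp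
  have a1At: "a1n At n (mimage (Qs 0) V) / real n = F n V" for n V
    unfolding a1n_def F_def ta_def Xs_def sum_shift1 At_def mimage_Phi_conj[OF Q_inv] by simp
  have reidx: "(SUP W\<in>Grassmannian s. \<phi> W) = (SUP V\<in>Grassmannian s. \<phi> (mimage (Qs 0) V))"
    for \<phi> :: "(real^'n) set \<Rightarrow> ereal"
  proof -
    have "(SUP W\<in>Grassmannian s. \<phi> W) = (SUP W\<in>mimage (Qs 0) ` Grassmannian s. \<phi> W)"
      using G_image[OF Q_inv[rule_format, of 0] s1] by simp
    also have "\<dots> = (SUP V\<in>Grassmannian s. \<phi> (mimage (Qs 0) V))" by (simp add: image_comp)
    finally show ?thesis .
  qed
  have thA: "theta_sup_limsup s A = (SUP V\<in>Grassmannian s. limsup (\<lambda>n. ereal (Gf n V)))"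
    "theta_sup_liminf s A = (SUP V\<in>Grassmannian s. liminf (\<lambda>n. ereal (Gf n V)))"
    "theta_limsup_sup s A = limsup (\<lambda>n. SUP V\<in>Grassmannian s. ereal (Gf n V))"
    "theta_liminf_sup s A = liminf (\<lambda>n. SUP V\<in>Grassmannian s. ereal (Gf n V))"
    unfolding theta_sup_limsup_def theta_sup_liminf_def theta_limsup_sup_def theta_liminf_sup_def a1A
    by simp_all
  have thAt: "theta_sup_limsup s At = (SUP V\<in>Grassmannian s. limsup (\<lambda>n. ereal (F n V)))"
    "theta_sup_liminf s At = (SUP V\<in>Grassmannian s. liminf (\<lambda>n. ereal (F n V)))"
    "theta_limsup_sup s At = limsup (\<lambda>n. SUP V\<in>Grassmannian s. ereal (F n V))"
    "theta_liminf_sup s At = liminf (\<lambda>n. SUP V\<in>Grassmannian s. ereal (F n V))"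
    unfolding theta_sup_limsup_def theta_sup_liminf_def theta_limsup_sup_def theta_liminf_sup_def
    by (subst reidx, simp add: a1At)+
  have eqconc: "theta_sup_limsup s A = theta_sup_limsup s At \<and>
       theta_sup_liminf s A = theta_sup_liminf s At \<and>
       theta_limsup_sup s A = theta_limsup_sup s At \<and>
       theta_liminf_sup s A = theta_liminf_sup s At"
    if h: "\<forall>\<epsilon>>0. \<exists>N. \<forall>n\<ge>N. \<forall>V\<in>Grassmannian s. \<bar>Gf n V - F n V\<bar> \<le> \<epsilon>"
    unfolding thA thAt using thetas_eq[OF G0 F0 h] by simp
  have part1: "(\<exists>q :: nat \<Rightarrow> real. (\<forall>n. q n \<noteq> 0 \<and> Qs n = q n *\<^sub>R mat 1)) \<longrightarrow>
       theta_sup_limsup s A = theta_sup_limsup s At \<and>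
       theta_sup_liminf s A = theta_sup_liminf s At \<and>
       theta_limsup_sup s A = theta_limsup_sup s At \<and>
       theta_liminf_sup s A = theta_liminf_sup s At"
  proof
    assume "\<exists>q :: nat \<Rightarrow> real. (\<forall>n. q n \<noteq> 0 \<and> Qs n = q n *\<^sub>R mat 1)"
    then obtain q :: "nat \<Rightarrow> real" where q: "\<And>n. q n \<noteq> 0" "\<And>n. Qs n = q n *\<^sub>R mat 1" by blast
    have "ta V j = aa V j" if "V \<in> Grassmannian s" for V j
    proof -
      have sub: "subspace (Xs V i)" for i using XG[OF that, of i] by (simp add: Grassmannian_def)
      show ?thesis unfolding ta_def aa_def q(2) by (simp add: mimage_scalar[OF sub q(1)])
    qed
    then have "F n V = Gf n V" if "V \<in> Grassmannian s" for n V
      unfolding F_def Gf_def using that by simp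
    then show "theta_sup_limsup s A = theta_sup_limsup s At \<and>
       theta_sup_liminf s A = theta_sup_liminf s At \<and>
       theta_limsup_sup s A = theta_limsup_sup s At \<and>
       theta_liminf_sup s A = theta_liminf_sup s At"
      by (intro eqconc) auto
  qed
  have part2: "\<forall>Q. Qs \<longlonglongrightarrow> Q \<and> orthogonal_matrix Q \<longrightarrow>
       theta_sup_limsup s A = theta_sup_limsup s At \<and>
       theta_sup_liminf s A = theta_sup_liminf s At \<and>
       theta_limsup_sup s A = theta_limsup_sup s At \<and>
       theta_liminf_sup s A = theta_liminf_sup s At"
  proof (intro allI impI)
    fix Q assume Q: "Qs \<longlonglongrightarrow> Q \<and> orthogonal_matrix Q"
    have st: "\<forall>\<epsilon>>0. \<exists>N. \<forall>j\<ge>N. \<forall>X\<in>Grassmannian s. \<forall>Y\<in>Grassmannian s.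
      \<bar>sub_angle (mimage (Qs j) X) (mimage (Qs (Suc j)) Y) - sub_angle X Y\<bar> \<le> \<epsilon>"
      using angle_step_orth[OF Q_inv _ _ s1] Q by blast
    define d where "d V j = \<bar>ta V j - aa V j\<bar>" for V j
    have dB: "\<forall>V\<in>Grassmannian s. \<forall>j. d V j \<le> pi"
    proof (intro ballI allI)
      fix V :: "(real^'n) set" and j assume V: "V \<in> Grassmannian s"
      show "d V j \<le> pi" unfolding d_def using tab[OF V, of j] aab[OF V, of j] by arith
    qed
    have dE: "\<forall>\<epsilon>>0. \<exists>N. \<forall>j\<ge>N. \<forall>V\<in>Grassmannian s. d V j \<le> \<epsilon>"
    proof (intro allI impI)
      fix \<epsilon> :: real assume "\<epsilon> > 0"
      then obtain N where N: "\<forall>j\<ge>N. \<forall>X\<in>Grassmannian s. \<forall>Y\<in>Grassmannian s.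
        \<bar>sub_angle (mimage (Qs j) X) (mimage (Qs (Suc j)) Y) - sub_angle X Y\<bar> \<le> \<epsilon>" using st by blast
      show "\<exists>N. \<forall>j\<ge>N. \<forall>V\<in>Grassmannian s. d V j \<le> \<epsilon>"
        unfolding d_def ta_def aa_def using N XG by blast
    qed
    have c: "\<forall>\<epsilon>>0. \<exists>N. \<forall>n\<ge>N. \<forall>V\<in>Grassmannian s. (\<Sum>j<n. d V j) / real n \<le> \<epsilon>"
      by (rule cesaro_unif[OF dB dE])
    have "\<bar>Gf n V - F n V\<bar> \<le> (\<Sum>j<n. d V j) / real n" for n V
    proof -
      have "Gf n V - F n V = (\<Sum>j<n. aa V j - ta V j) / real n"
        unfolding Gf_def F_def by (simp add: sum_subtractf diff_divide_distrib)
      then have "\<bar>Gf n V - F n V\<bar> = \<bar>\<Sum>j<n. aa V j - ta V j\<bar> / real n" by simp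
      also have "\<dots> \<le> (\<Sum>j<n. \<bar>aa V j - ta V j\<bar>) / real n"
        by (intro divide_right_mono sum_abs) simp
      finally show ?thesis unfolding d_def by (simp add: abs_minus_commute)
    qed
    then have "\<forall>\<epsilon>>0. \<exists>N. \<forall>n\<ge>N. \<forall>V\<in>Grassmannian s. \<bar>Gf n V - F n V\<bar> \<le> \<epsilon>"
      using c by (meson order_trans)
    then show "theta_sup_limsup s A = theta_sup_limsup s At \<and>
       theta_sup_liminf s A = theta_sup_liminf s At \<and>
       theta_limsup_sup s A = theta_limsup_sup s At \<and>
       theta_liminf_sup s A = theta_liminf_sup s At" by (rule eqconc)
  qed
  have part3: "\<forall>Q. Qs \<longlonglongrightarrow> Q \<and> invertible Q \<longrightarrow>
       (theta_sup_limsup s A = 0 \<longleftrightarrow> theta_sup_limsup s At = 0) \<and>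
       (theta_sup_liminf s A = 0 \<longleftrightarrow> theta_sup_liminf s At = 0) \<and>
       (theta_limsup_sup s A = 0 \<longleftrightarrow> theta_limsup_sup s At = 0) \<and>
       (theta_liminf_sup s A = 0 \<longleftrightarrow> theta_liminf_sup s At = 0)"
  proof (intro allI impI)
    fix Q assume Q: "Qs \<longlonglongrightarrow> Q \<and> invertible Q"
    obtain C where C: "C > 0" and st: "\<forall>\<epsilon>>0. \<exists>N. \<forall>j\<ge>N. \<forall>X\<in>Grassmannian s. \<forall>Y\<in>Grassmannian s.
      sub_angle (mimage (Qs j) X) (mimage (Qs (Suc j)) Y) \<le> C * sub_angle X Y + \<epsilon> \<and>
      sub_angle X Y \<le> C * sub_angle (mimage (Qs j) X) (mimage (Qs (Suc j)) Y) + \<epsilon>"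
      using angle_step_inv[OF Q_inv _ _ s1] Q by blast
    define d1 where "d1 V j = ta V j - C * aa V j" for V j
    define d2 where "d2 V j = aa V j - C * ta V j" for V j
    have d1B: "\<forall>V\<in>Grassmannian s. \<forall>j. d1 V j \<le> pi / 2"
    proof (intro ballI allI)
      fix V :: "(real^'n) set" and j assume V: "V \<in> Grassmannian s"
      have "0 \<le> C * aa V j" using C tab[OF V, of j] aab[OF V, of j] by simp
      then show "d1 V j \<le> pi / 2" unfolding d1_def using tab[OF V, of j] aab[OF V, of j] by linarith
    qed
    have d2B: "\<forall>V\<in>Grassmannian s. \<forall>j. d2 V j \<le> pi / 2"
    proof (intro ballI allI)
      fix V :: "(real^'n) set" and j assume V: "V \<in> Grassmannian s"
      have "0 \<le> C * ta V j" using C tab[OF V, of j] aab[OF V, of j] by simp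
      then show "d2 V j \<le> pi / 2" unfolding d2_def using tab[OF V, of j] aab[OF V, of j] by linarith
    qed
    have d1E: "\<forall>\<epsilon>>0. \<exists>N. \<forall>j\<ge>N. \<forall>V\<in>Grassmannian s. d1 V j \<le> \<epsilon>"
    proof (intro allI impI)
      fix \<epsilon> :: real assume "\<epsilon> > 0"
      then obtain N where N: "\<forall>j\<ge>N. \<forall>X\<in>Grassmannian s. \<forall>Y\<in>Grassmannian s.
        sub_angle (mimage (Qs j) X) (mimage (Qs (Suc j)) Y) \<le> C * sub_angle X Y + \<epsilon> \<and>
        sub_angle X Y \<le> C * sub_angle (mimage (Qs j) X) (mimage (Qs (Suc j)) Y) + \<epsilon>" using st by blast
      show "\<exists>N. \<forall>j\<ge>N. \<forall>V\<in>Grassmannian s. d1 V j \<le> \<epsilon>"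
      proof (intro exI[of _ N] allI impI ballI)
        fix j and V :: "(real^'n) set" assume j: "N \<le> j" and V: "V \<in> Grassmannian s"
        have "sub_angle (mimage (Qs j) (Xs V j)) (mimage (Qs (Suc j)) (Xs V (Suc j))) \<le> C * sub_angle (Xs V j) (Xs V (Suc j)) + \<epsilon> \<and>
          sub_angle (Xs V j) (Xs V (Suc j)) \<le> C * sub_angle (mimage (Qs j) (Xs V j)) (mimage (Qs (Suc j)) (Xs V (Suc j))) + \<epsilon>"
          using N j XG[OF V, of j] XG[OF V, of "Suc j"] by blast
        then show "d1 V j \<le> \<epsilon>" unfolding d1_def ta_def aa_def by linarith
      qed
    qed
    have d2E: "\<forall>\<epsilon>>0. \<exists>N. \<forall>j\<ge>N. \<forall>V\<in>Grassmannian s. d2 V j \<le> \<epsilon>"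
    proof (intro allI impI)
      fix \<epsilon> :: real assume "\<epsilon> > 0"
      then obtain N where N: "\<forall>j\<ge>N. \<forall>X\<in>Grassmannian s. \<forall>Y\<in>Grassmannian s.
        sub_angle (mimage (Qs j) X) (mimage (Qs (Suc j)) Y) \<le> C * sub_angle X Y + \<epsilon> \<and>
        sub_angle X Y \<le> C * sub_angle (mimage (Qs j) X) (mimage (Qs (Suc j)) Y) + \<epsilon>" using st by blast
      show "\<exists>N. \<forall>j\<ge>N. \<forall>V\<in>Grassmannian s. d2 V j \<le> \<epsilon>"
      proof (intro exI[of _ N] allI impI ballI)
        fix j and V :: "(real^'n) set" assume j: "N \<le> j" and V: "V \<in> Grassmannian s"
        have "sub_angle (mimage (Qs j) (Xs V j)) (mimage (Qs (Suc j)) (Xs V (Suc j))) \<le> C * sub_angle (Xs V j) (Xs V (Suc j)) + \<epsilon> \<and>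
          sub_angle (Xs V j) (Xs V (Suc j)) \<le> C * sub_angle (mimage (Qs j) (Xs V j)) (mimage (Qs (Suc j)) (Xs V (Suc j))) + \<epsilon>"
          using N j XG[OF V, of j] XG[OF V, of "Suc j"] by blast
        then show "d2 V j \<le> \<epsilon>" unfolding d2_def ta_def aa_def by linarith
      qed
    qed
    have e1: "F n V - C * Gf n V = (\<Sum>j<n. d1 V j) / real n" for n V
      unfolding F_def Gf_def d1_def by (simp add: sum_subtractf sum_distrib_left diff_divide_distrib)
    have e2: "Gf n V - C * F n V = (\<Sum>j<n. d2 V j) / real n" for n V
      unfolding F_def Gf_def d2_def by (simp add: sum_subtractf sum_distrib_left diff_divide_distrib)
    have h1: "\<forall>\<epsilon>>0. \<exists>N. \<forall>n\<ge>N. \<forall>V\<in>Grassmannian s. F n V \<le> C * Gf n V + \<epsilon>"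
      using cesaro_unif[OF d1B d1E] e1 by (smt (verit, best))
    have h2: "\<forall>\<epsilon>>0. \<exists>N. \<forall>n\<ge>N. \<forall>V\<in>Grassmannian s. Gf n V \<le> C * F n V + \<epsilon>"
      using cesaro_unif[OF d2B d2E] e2 by (smt (verit, best))
    note z1 = thetas_zero[OF _ F0 G0 h1] and z2 = thetas_zero[OF _ G0 F0 h2]
    show "(theta_sup_limsup s A = 0 \<longleftrightarrow> theta_sup_limsup s At = 0) \<and>
       (theta_sup_liminf s A = 0 \<longleftrightarrow> theta_sup_liminf s At = 0) \<and>
       (theta_limsup_sup s A = 0 \<longleftrightarrow> theta_limsup_sup s At = 0) \<and>
       (theta_liminf_sup s A = 0 \<longleftrightarrow> theta_liminf_sup s At = 0)"
      unfolding thA thAt using z1 z2 C by (metis less_imp_le)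
  qed
  show ?thesis using part1 part2 part3 by blast
qed

end
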